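(* Let $w,w'\in[0,1]$ with $w+w'=1$. If $\textbf{F}$ is a strongly convex and $gH$-differentiable IVF on a nonempty convex subset $\mathcal{X}$ of $\mathbb{R}^n$ with $gH$-Lipschitz gradient, then there exist $\sigma>0$ and $L>0$ such that \[(\mathcal{W}(\nabla\textbf{F}(x))-\mathcal{W}(\nabla\textbf{F}(y)))^T(x-y)\ge\frac{\sigma}{L^2}\lVert\mathcal{W}(\nabla\textbf{F}(x))-\mathcal{W}(\nabla\textbf{F}(y))\rVert^2\quad\text{for all }x,y\in\mathcal{X}.\]
   Context: $I(\mathbb{R})$: closed bounded intervals $\textbf{A}=[\underline{a},\overline{a}]$ with Moore arithmetic ($\oplus$ endpointwise; $\lambda\odot\textbf{A}=[\lambda\underline{a},\lambda\overline{a}]$ if $\lambda\ge0$, $[\lambda\overline{a},\lambda\underline{a}]$ if $\lambda<0$); $\textbf{A}\ominus_{gH}\textbf{B}=[\min\{\underline{a}-\underline{b},\overline{a}-\overline{b}\},\max\{\underline{a}-\underline{b},\overline{a}-\overline{b}\}]$ (componentwise on $I(\mathbb{R})^n$). $\textbf{A}\preceq\textbf{B}$ iff $\underline{a}\le\underline{b}$, $\overline{a}\le\overline{b}$. Norms: $\lVert\textbf{A}\rVert_{I(\mathbb{R})}=\max\{|\underline{a}|,|\overline{a}|\}$, $\lVert(\textbf{A}_i)\rVert_{I(\mathbb{R})^n}=\sum_i\lVert\textbf{A}_i\rVert_{I(\mathbb{R})}$, $\lVert\cdot\rVert$ Euclidean. $D_i\textbf{F}(x)=\lim_{h\to0}\frac1h\odot(\textbf{F}(x+he_i)\ominus_{gH}\textbf{F}(x))$,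 $\nabla\textbf{F}(x)=(D_1\textbf{F}(x),\dots,D_n\textbf{F}(x))^T$. Linear IVF: $\textbf{L}(x)=\bigoplus_i x_i\odot\textbf{L}(e_i)$. $\textbf{F}$ is $gH$-differentiable at $\bar{x}$ if there exist a linear IVF $\textbf{L}_{\bar{x}}$, an IVF $\textbf{E}(\textbf{F}(\bar{x});d)$ and $\delta>0$ with $(\textbf{F}(\bar{x}+d)\ominus_{gH}\textbf{F}(\bar{x}))\ominus_{gH}\textbf{L}_{\bar{x}}(d)=\lVert d\rVert\odot\textbf{E}(\textbf{F}(\bar{x});d)$ for $\lVert d\rVert<\delta$ and $\textbf{E}\to\textbf{0}$ as $\lVert d\rVert\to0$. Strongly convex: there exist a convex IVF $\textbf{G}$ (i.e. $\textbf{G}(\lambda x_1+(1-\lambda)x_2)\preceq\lambda\odot\textbf{G}(x_1)\oplus(1-\lambda)\odot\textbf{G}(x_2)$) and $\sigma>0$ with $\textbf{F}(x)=\textbf{G}(x)\oplus\frac12\lVert x\rVert^2\odot[\sigma,\sigma]$. $gH$-Lipschitz gradient: $\lVert\nabla\textbf{F}(x)\ominus_{gH}\nabla\textbf{F}(y)\rVert_{I(\mathbb{R})^n}\le M\lVert x-y\rVert$ for some $M>0$ and all $x,y$. $\mathcal{W}(\textbf{A}_1,\dots,\textbf{A}_n)=(w\underline{a}_1+w'\overline{a}_1,\dots,w\underline{a}_n+w'\overline{a}_n)^T$. *)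

theory Defs
  imports "HOL-Analysis.Analysis"
begin

text \<open>Closed bounded intervals [a_lo, a_hi] represented as pairs (a_lo, a_hi)
  with a_lo \<le> a_hi.\<close>

type_synonym interval = "real \<times> real"

definition ivalid :: "interval \<Rightarrow> bool" where
  "ivalid A \<longleftrightarrow> fst A \<le> snd A"

definition iplus :: "interval \<Rightarrow> interval \<Rightarrow> interval" where
  "iplus A B = (fst A + fst B, snd A + snd B)"

definition iscale :: "real \<Rightarrow> interval \<Rightarrow> interval" where
  "iscale l A = (if l \<ge> 0 then (l * fst A, l * snd A) else (l * snd A, l * fst A))"

definition gHminus :: "interval \<Rightarrow> interval \<Rightarrow> interval" where
  "gHminus A B = (min (fst A - fst B) (snd A - snd B), max (fst A - fst B) (snd A - snd B))"

definition ile :: "interval \<Rightarrow> interval \<Rightarrow> bool" where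
  "ile A B \<longleftrightarrow> fst A \<le> fst B \<and> snd A \<le> snd B"

definition inorm :: "interval \<Rightarrow> real" where
  "inorm A = max \<bar>fst A\<bar> \<bar>snd A\<bar>"

definition inorm_vec :: "interval ^ 'n \<Rightarrow> real" where
  "inorm_vec V = (\<Sum>i\<in>UNIV. inorm (V $ i))"

definition gHminus_vec :: "interval ^ 'n \<Rightarrow> interval ^ 'n \<Rightarrow> interval ^ 'n" where
  "gHminus_vec U V = (\<chi> i. gHminus (U $ i) (V $ i))"

definition is_ivf :: "(real ^ 'n \<Rightarrow> interval) \<Rightarrow> bool" where
  "is_ivf F \<longleftrightarrow> (\<forall>x. ivalid (F x))"

definition gH_partial :: "(real ^ 'n \<Rightarrow> interval) \<Rightarrow> real ^ 'n \<Rightarrow> 'n \<Rightarrow> interval" where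
  "gH_partial F x i =
     Lim (at 0) (\<lambda>h. iscale (1 / h) (gHminus (F (x + h *\<^sub>R axis i 1)) (F x)))"

definition gH_gradient :: "(real ^ 'n \<Rightarrow> interval) \<Rightarrow> real ^ 'n \<Rightarrow> interval ^ 'n" where
  "gH_gradient F x = (\<chi> i. gH_partial F x i)"

text \<open>Linear IVF: L(x) = sum_i x_i (.) L(e_i) (Moore sums; + on real \<times> real is endpointwise, i.e. iplus).\<close>
definition linear_ivf :: "(real ^ 'n \<Rightarrow> interval) \<Rightarrow> bool" where
  "linear_ivf L \<longleftrightarrow> is_ivf L \<and>
     (\<forall>x. L x = (\<Sum>i\<in>UNIV. iscale (x $ i) (L (axis i 1))))"

definition gH_differentiable_at :: "(real ^ 'n \<Rightarrow> interval) \<Rightarrow> real ^ 'n \<Rightarrow> bool" where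
  "gH_differentiable_at F xb \<longleftrightarrow>
     (\<exists>L E \<delta>. linear_ivf L \<and> \<delta> > 0 \<and>
        (\<forall>d. norm d < \<delta> \<longrightarrow>
           gHminus (gHminus (F (xb + d)) (F xb)) (L d) = iscale (norm d) (E d)) \<and>
        (E \<longlongrightarrow> (0, 0)) (at 0))"

definition convex_ivf_on :: "(real ^ 'n) set \<Rightarrow> (real ^ 'n \<Rightarrow> interval) \<Rightarrow> bool" where
  "convex_ivf_on X G \<longleftrightarrow> (\<forall>x\<in>X. ivalid (G x)) \<and>
     (\<forall>x1\<in>X. \<forall>x2\<in>X. \<forall>l\<in>{0..1}.
        ile (G (l *\<^sub>R x1 + (1 - l) *\<^sub>R x2)) (iplus (iscale l (G x1)) (iscale (1 - l) (G x2))))"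

definition strongly_convex_ivf_on :: "(real ^ 'n) set \<Rightarrow> (real ^ 'n \<Rightarrow> interval) \<Rightarrow> bool" where
  "strongly_convex_ivf_on X F \<longleftrightarrow>
     (\<exists>G \<sigma>. convex_ivf_on X G \<and> \<sigma> > 0 \<and>
        (\<forall>x\<in>X. F x = iplus (G x) (iscale (1/2 * (norm x)\<^sup>2) (\<sigma>, \<sigma>))))"

definition gH_lipschitz_gradient_on :: "(real ^ 'n) set \<Rightarrow> (real ^ 'n \<Rightarrow> interval) \<Rightarrow> bool" where
  "gH_lipschitz_gradient_on X F \<longleftrightarrow>
     (\<exists>M > 0. \<forall>x\<in>X. \<forall>y\<in>X.
        inorm_vec (gHminus_vec (gH_gradient F x) (gH_gradient F y)) \<le> M * norm (x - y))"

definition Wmap :: "real \<Rightarrow> real \<Rightarrow> interval ^ 'n \<Rightarrow> real ^ 'n" where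
  "Wmap w w' V = (\<chi> i. w * fst (V $ i) + w' * snd (V $ i))"

end

theory Submission
  imports Defs
begin


lemma iscale_ord: "a \<le> b \<Longrightarrow> iscale l (a,b) = (min (l*a) (l*b), max (l*a) (l*b))"
  by (auto simp: iscale_def min_def max_def mult_left_mono mult_left_mono_neg)

lemma abs_le_minmax: "\<bar>p::real\<bar> \<le> max \<bar>min p q\<bar> \<bar>max p q\<bar> \<and> \<bar>q\<bar> \<le> max \<bar>min p q\<bar> \<bar>max p q\<bar>"
  by (simp add: min_def max_def abs_if)

lemma linear_ivf_valid: "linear_ivf L \<Longrightarrow> fst (L v) \<le> snd (L v)"
proof -
  assume "linear_ivf L"
  then have "is_ivf L" unfolding linear_ivf_def by blast
  then show ?thesis by (simp add: is_ivf_def ivalid_def)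
qed

lemma linear_ivf_fst:
  assumes "linear_ivf L"
  shows "fst (L d) = (\<Sum>i\<in>UNIV. min (d$i * fst (L (axis i 1))) (d$i * snd (L (axis i 1))))"
    and "snd (L d) = (\<Sum>i\<in>UNIV. max (d$i * fst (L (axis i 1))) (d$i * snd (L (axis i 1))))"
proof -
  have v: "fst (L (axis i 1)) \<le> snd (L (axis i 1))" for i
    using assms by (rule linear_ivf_valid)
  have e: "L d = (\<Sum>i\<in>UNIV. iscale (d $ i) (L (axis i 1)))"
    using assms unfolding linear_ivf_def by blast
  have "iscale (d $ i) (L (axis i 1)) = (min (d$i * fst (L (axis i 1))) (d$i * snd (L (axis i 1))),
      max (d$i * fst (L (axis i 1))) (d$i * snd (L (axis i 1))))" for i
    using iscale_ord[OF v[of i], of "d$i"] by simp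
  then show "fst (L d) = (\<Sum>i\<in>UNIV. min (d$i * fst (L (axis i 1))) (d$i * snd (L (axis i 1))))"
    and "snd (L d) = (\<Sum>i\<in>UNIV. max (d$i * fst (L (axis i 1))) (d$i * snd (L (axis i 1))))"
    unfolding e by (simp_all add: fst_sum snd_sum)
qed

definition approx_at :: "(real^'n \<Rightarrow> interval) \<Rightarrow> real^'n \<Rightarrow> (real^'n \<Rightarrow> real) \<Rightarrow> (real^'n \<Rightarrow> real) \<Rightarrow> bool" where
  "approx_at F z P Q \<longleftrightarrow> (\<forall>e>0. \<exists>r>0. \<forall>d. norm d < r \<longrightarrow>
     \<bar>min (fst (F (z+d)) - fst (F z)) (snd (F (z+d)) - snd (F z)) - P d\<bar> \<le> e * norm d \<and>
     \<bar>max (fst (F (z+d)) - fst (F z)) (snd (F (z+d)) - snd (F z)) - Q d\<bar> \<le> e * norm d)"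

lemma gHminus_self: "gHminus A A = (0,0)"
  by (simp add: gHminus_def)

lemma gh_approx_L:
  fixes F :: "real^'n \<Rightarrow> interval"
  assumes lin: "linear_ivf L" and dp: "\<delta> > 0"
    and eq: "\<forall>d. norm d < \<delta> \<longrightarrow> gHminus (gHminus (F (z + d)) (F z)) (L d) = iscale (norm d) (E d)"
    and lim: "(E \<longlongrightarrow> (0, 0)) (at 0)"
  shows "approx_at F z (\<lambda>d. fst (L d)) (\<lambda>d. snd (L d))"
  unfolding approx_at_def
proof (intro allI impI)
  fix e :: real assume e: "e > 0"
  have "\<forall>\<^sub>F d in at 0. dist (E d) (0,0) < e" using lim e by (auto simp: tendsto_iff)
  then obtain r where r: "r > 0" and rr: "\<And>d. d \<noteq> 0 \<Longrightarrow> dist d 0 < r \<Longrightarrow> dist (E d) (0,0) < e"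
    by (auto simp: eventually_at)
  show "\<exists>r>0. \<forall>d. norm d < r \<longrightarrow>
     \<bar>min (fst (F (z+d)) - fst (F z)) (snd (F (z+d)) - snd (F z)) - fst (L d)\<bar> \<le> e * norm d \<and>
     \<bar>max (fst (F (z+d)) - fst (F z)) (snd (F (z+d)) - snd (F z)) - snd (L d)\<bar> \<le> e * norm d"
  proof (intro exI[of _ "min r \<delta>"] conjI[of "0 < min r \<delta>"] allI impI)
    show "min r \<delta> > 0" using r dp by simp
    fix d :: "real^'n" assume nd: "norm d < min r \<delta>"
    show "\<bar>min (fst (F (z+d)) - fst (F z)) (snd (F (z+d)) - snd (F z)) - fst (L d)\<bar> \<le> e * norm d \<and>
     \<bar>max (fst (F (z+d)) - fst (F z)) (snd (F (z+d)) - snd (F z)) - snd (L d)\<bar> \<le> e * norm d"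
    proof (cases "d = 0")
      case True
      have "fst (L d) = 0" "snd (L d) = 0"
        using linear_ivf_fst(1)[OF lin, of d] linear_ivf_fst(2)[OF lin, of d] True by simp_all
      then show ?thesis using True by simp
    next
      case False
      define p where "p = min (fst (F (z+d)) - fst (F z)) (snd (F (z+d)) - snd (F z)) - fst (L d)"
      define q where "q = max (fst (F (z+d)) - fst (F z)) (snd (F (z+d)) - snd (F z)) - snd (L d)"
      have "gHminus (gHminus (F (z + d)) (F z)) (L d) = (min p q, max p q)"
        unfolding p_def q_def gHminus_def by simp
      moreover have "gHminus (gHminus (F (z + d)) (F z)) (L d) = iscale (norm d) (E d)"
        using eq nd by auto
      ultimately have mm: "min p q = norm d * fst (E d)" "max p q = norm d * snd (E d)"
        by (auto simp: iscale_def)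
      have "dist (E d) (0,0) < e" using rr[OF False] nd by (simp add: dist_norm)
      then have "norm (E d) < e" by (simp add: dist_norm zero_prod_def[symmetric])
      then have fe: "\<bar>fst (E d)\<bar> < e" "\<bar>snd (E d)\<bar> < e"
        using norm_fst_le[of "fst (E d)" "snd (E d)"] norm_snd_le[of "snd (E d)" "fst (E d)"] by auto
      have "\<bar>min p q\<bar> \<le> e * norm d" "\<bar>max p q\<bar> \<le> e * norm d"
      proof -
        have "norm d * \<bar>fst (E d)\<bar> \<le> norm d * e" "norm d * \<bar>snd (E d)\<bar> \<le> norm d * e"
          using fe by (auto intro!: mult_left_mono)
        then show "\<bar>min p q\<bar> \<le> e * norm d" "\<bar>max p q\<bar> \<le> e * norm d"
          unfolding mm by (auto simp: abs_mult mult.commute)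
      qed
      then have pq: "\<bar>p\<bar> \<le> e * norm d \<and> \<bar>q\<bar> \<le> e * norm d"
        using abs_le_minmax[of p q] by (meson max.bounded_iff order_trans)
      then show ?thesis unfolding p_def q_def .
    qed
  qed
qed

lemma quot_bound:
  fixes h X A c :: real
  assumes "h \<noteq> 0" "\<bar>X - h*A\<bar> \<le> c*\<bar>h\<bar>"
  shows "\<bar>(1/h)*X - A\<bar> \<le> c"
proof -
  have "(1/h)*X - A = (X - h*A)/h" using assms(1) by (simp add: field_simps)
  then have "\<bar>(1/h)*X - A\<bar> = \<bar>X - h*A\<bar>/\<bar>h\<bar>" by (simp add: abs_divide)
  also have "\<dots> \<le> c" using assms by (simp add: divide_le_eq)
  finally show ?thesis .
qed

lemma axis_scale_sum:
  fixes f g :: "'n::finite \<Rightarrow> real"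
  assumes "f i \<le> g i"
  shows "(\<Sum>k\<in>UNIV. min ((h *\<^sub>R axis i 1 :: real^'n)$k * f k) ((h *\<^sub>R axis i 1 :: real^'n)$k * g k)) = min (h * f i) (h * g i)"
    and "(\<Sum>k\<in>UNIV. max ((h *\<^sub>R axis i 1 :: real^'n)$k * f k) ((h *\<^sub>R axis i 1 :: real^'n)$k * g k)) = max (h * f i) (h * g i)"
proof -
  have "(\<Sum>k\<in>UNIV. min ((h *\<^sub>R axis i 1 :: real^'n)$k * f k) ((h *\<^sub>R axis i 1 :: real^'n)$k * g k))
        = (\<Sum>k\<in>UNIV. if k = i then min (h * f i) (h * g i) else 0)"
    by (rule sum.cong) (auto simp: axis_def)
  also have "\<dots> = min (h * f i) (h * g i)" by simp
  finally show "(\<Sum>k\<in>UNIV. min ((h *\<^sub>R axis i 1 :: real^'n)$k * f k) ((h *\<^sub>R axis i 1 :: real^'n)$k * g k)) = min (h * f i) (h * g i)" .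
  have "(\<Sum>k\<in>UNIV. max ((h *\<^sub>R axis i 1 :: real^'n)$k * f k) ((h *\<^sub>R axis i 1 :: real^'n)$k * g k))
        = (\<Sum>k\<in>UNIV. if k = i then max (h * f i) (h * g i) else 0)"
    by (rule sum.cong) (auto simp: axis_def)
  also have "\<dots> = max (h * f i) (h * g i)" by simp
  finally show "(\<Sum>k\<in>UNIV. max ((h *\<^sub>R axis i 1 :: real^'n)$k * f k) ((h *\<^sub>R axis i 1 :: real^'n)$k * g k)) = max (h * f i) (h * g i)" .
qed

lemma gh_partial_L:
  fixes F :: "real^'n \<Rightarrow> interval"
  assumes lin: "linear_ivf L" and ap: "approx_at F z (\<lambda>d. fst (L d)) (\<lambda>d. snd (L d))"
  shows "gH_partial F z i = L (axis i 1)"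
proof -
  define A where "A = fst (L (axis i 1))"
  define B where "B = snd (L (axis i 1))"
  have AB: "A \<le> B" using linear_ivf_valid[OF lin] by (simp add: A_def B_def)
  define m where "m h = min (fst (F (z + h *\<^sub>R axis i 1)) - fst (F z)) (snd (F (z + h *\<^sub>R axis i 1)) - snd (F z))" for h
  define M where "M h = max (fst (F (z + h *\<^sub>R axis i 1)) - fst (F z)) (snd (F (z + h *\<^sub>R axis i 1)) - snd (F z))" for h
  define q where "q h = iscale (1 / h) (gHminus (F (z + h *\<^sub>R axis i 1)) (F z))" for h
  have q1: "q h = (if 1/h \<ge> 0 then ((1/h) * m h, (1/h) * M h) else ((1/h) * M h, (1/h) * m h))" for h
    by (simp add: q_def iscale_def gHminus_def m_def M_def)
  have Lh: "fst (L (h *\<^sub>R axis i 1)) = min (h*A) (h*B)" "snd (L (h *\<^sub>R axis i 1)) = max (h*A) (h*B)" for h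
    unfolding A_def B_def
    by (rule trans[OF linear_ivf_fst(1)[OF lin] axis_scale_sum(1)], rule linear_ivf_valid[OF lin],
        rule trans[OF linear_ivf_fst(2)[OF lin] axis_scale_sum(2)], rule linear_ivf_valid[OF lin])
  have key: "\<exists>s>0. \<forall>h. h \<noteq> 0 \<and> \<bar>h\<bar> < s \<longrightarrow> \<bar>fst (q h) - A\<bar> \<le> e \<and> \<bar>snd (q h) - B\<bar> \<le> e" if e: "e > 0" for e
  proof -
    obtain r where r: "r > 0" and rr: "\<And>d. norm d < r \<Longrightarrow>
       \<bar>min (fst (F (z+d)) - fst (F z)) (snd (F (z+d)) - snd (F z)) - fst (L d)\<bar> \<le> e * norm d \<and>
       \<bar>max (fst (F (z+d)) - fst (F z)) (snd (F (z+d)) - snd (F z)) - snd (L d)\<bar> \<le> e * norm d"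
      using ap e unfolding approx_at_def by blast
    show ?thesis
    proof (intro exI[of _ r] conjI[of "0 < r"] allI impI)
      show "r > 0" by fact
      fix h :: real assume h: "h \<noteq> 0 \<and> \<bar>h\<bar> < r"
      have "norm (h *\<^sub>R axis i (1::real) :: real^'n) = \<bar>h\<bar>" by simp
      then have b: "\<bar>m h - min (h*A) (h*B)\<bar> \<le> e * \<bar>h\<bar>" "\<bar>M h - max (h*A) (h*B)\<bar> \<le> e * \<bar>h\<bar>"
        using rr[of "h *\<^sub>R axis i 1"] h unfolding m_def M_def Lh by auto
      show "\<bar>fst (q h) - A\<bar> \<le> e \<and> \<bar>snd (q h) - B\<bar> \<le> e"
      proof (cases "h > 0")
        case True
        then have "min (h*A) (h*B) = h*A" "max (h*A) (h*B) = h*B" using AB by (auto simp: mult_left_mono)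
        then show ?thesis using b True q1[of h] quot_bound[of h "m h" A e] quot_bound[of h "M h" B e] by auto
      next
        case False
        then have hn: "h < 0" using h by auto
        then have "min (h*A) (h*B) = h*B" "max (h*A) (h*B) = h*A" using AB by (auto simp: mult_left_mono_neg)
        then show ?thesis using b hn q1[of h] quot_bound[of h "m h" B e] quot_bound[of h "M h" A e] by auto
      qed
    qed
  qed
  have t1: "((\<lambda>h. fst (q h)) \<longlongrightarrow> A) (at 0)"
    unfolding LIM_eq
  proof (intro allI impI)
    fix r :: real assume "r > 0"
    then obtain s where "s > 0" "\<forall>h. h \<noteq> 0 \<and> \<bar>h\<bar> < s \<longrightarrow> \<bar>fst (q h) - A\<bar> \<le> r/2 \<and> \<bar>snd (q h) - B\<bar> \<le> r/2"
      using key[of "r/2"] by auto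
    then show "\<exists>s>0. \<forall>x. x \<noteq> 0 \<and> norm (x - 0) < s \<longrightarrow> norm (fst (q x) - A) < r"
      using \<open>r > 0\<close> by (intro exI[of _ s]) force
  qed
  have t2: "((\<lambda>h. snd (q h)) \<longlongrightarrow> B) (at 0)"
    unfolding LIM_eq
  proof (intro allI impI)
    fix r :: real assume "r > 0"
    then obtain s where "s > 0" "\<forall>h. h \<noteq> 0 \<and> \<bar>h\<bar> < s \<longrightarrow> \<bar>fst (q h) - A\<bar> \<le> r/2 \<and> \<bar>snd (q h) - B\<bar> \<le> r/2"
      using key[of "r/2"] by auto
    then show "\<exists>s>0. \<forall>x. x \<noteq> 0 \<and> norm (x - 0) < s \<longrightarrow> norm (snd (q x) - B) < r"
      using \<open>r > 0\<close> by (intro exI[of _ s]) force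
  qed
  have "(q \<longlongrightarrow> (A, B)) (at 0)"
    using tendsto_Pair[OF t1 t2] by simp
  then have "Lim (at 0) q = (A, B)" by (intro tendsto_Lim) (auto simp: trivial_limit_at)
  then show ?thesis unfolding gH_partial_def q_def A_def B_def by simp
qed

lemma gh_diff_approx:
  fixes F :: "real^'n \<Rightarrow> interval"
  assumes "gH_differentiable_at F z"
  shows "\<forall>i. fst (gH_partial F z i) \<le> snd (gH_partial F z i)"
    and "approx_at F z (\<lambda>d. \<Sum>i\<in>UNIV. min (d$i * fst (gH_partial F z i)) (d$i * snd (gH_partial F z i)))
                       (\<lambda>d. \<Sum>i\<in>UNIV. max (d$i * fst (gH_partial F z i)) (d$i * snd (gH_partial F z i)))"
proof -
  obtain L E \<delta> where lin: "linear_ivf L" and dp: "\<delta> > 0"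
    and eq: "\<forall>d. norm d < \<delta> \<longrightarrow> gHminus (gHminus (F (z + d)) (F z)) (L d) = iscale (norm d) (E d)"
    and lim: "(E \<longlongrightarrow> (0, 0)) (at 0)"
    using assms unfolding gH_differentiable_at_def by blast
  have ap: "approx_at F z (\<lambda>d. fst (L d)) (\<lambda>d. snd (L d))" by (rule gh_approx_L[OF lin dp eq lim])
  have gp: "gH_partial F z i = L (axis i 1)" for i by (rule gh_partial_L[OF lin ap])
  show "\<forall>i. fst (gH_partial F z i) \<le> snd (gH_partial F z i)"
    using linear_ivf_valid[OF lin] by (simp add: gp)
  show "approx_at F z (\<lambda>d. \<Sum>i\<in>UNIV. min (d$i * fst (gH_partial F z i)) (d$i * snd (gH_partial F z i)))
                       (\<lambda>d. \<Sum>i\<in>UNIV. max (d$i * fst (gH_partial F z i)) (d$i * snd (gH_partial F z i)))"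
  proof -
    have e1: "(\<lambda>d. fst (L d)) = (\<lambda>d. \<Sum>i\<in>UNIV. min (d$i * fst (gH_partial F z i)) (d$i * snd (gH_partial F z i)))"
      by (rule ext, subst linear_ivf_fst(1)[OF lin], simp add: gp)
    have e2: "(\<lambda>d. snd (L d)) = (\<lambda>d. \<Sum>i\<in>UNIV. max (d$i * fst (gH_partial F z i)) (d$i * snd (gH_partial F z i)))"
      by (rule ext, subst linear_ivf_fst(2)[OF lin], simp add: gp)
    show ?thesis using ap unfolding e1 e2 .
  qed
qed



definition PPz :: "(real^'n \<Rightarrow> interval) \<Rightarrow> real^'n \<Rightarrow> real^'n \<Rightarrow> real" where
  "PPz F z d = (\<Sum>i\<in>UNIV. min (d$i * fst (gH_partial F z i)) (d$i * snd (gH_partial F z i)))"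
definition QQz :: "(real^'n \<Rightarrow> interval) \<Rightarrow> real^'n \<Rightarrow> real^'n \<Rightarrow> real" where
  "QQz F z d = (\<Sum>i\<in>UNIV. max (d$i * fst (gH_partial F z i)) (d$i * snd (gH_partial F z i)))"

lemma PPz_scale: "h \<ge> 0 \<Longrightarrow> PPz F z (h *\<^sub>R d) = h * PPz F z d"
  unfolding PPz_def sum_distrib_left
  by (rule sum.cong) (auto simp: min_mult_distrib_left mult.assoc)

lemma QQz_scale: "h \<ge> 0 \<Longrightarrow> QQz F z (h *\<^sub>R d) = h * QQz F z d"
  unfolding QQz_def sum_distrib_left
  by (rule sum.cong) (auto simp: max_mult_distrib_left mult.assoc)

lemma PPz_neg: "PPz F z (- d) = - QQz F z d"
  unfolding PPz_def QQz_def sum_negf[symmetric]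
  by (rule sum.cong) (auto simp: min_def max_def)

lemma QQz_neg: "QQz F z (- d) = - PPz F z d"
  unfolding PPz_def QQz_def sum_negf[symmetric]
  by (rule sum.cong) (auto simp: min_def max_def)

lemma gh_diff_approx':
  fixes F :: "real^'n \<Rightarrow> interval"
  assumes "gH_differentiable_at F z"
  shows "approx_at F z (PPz F z) (QQz F z)"
  using gh_diff_approx(2)[OF assms] unfolding PPz_def[abs_def] QQz_def[abs_def] .

lemma slope_mono:
  fixes g :: "real \<Rightarrow> real"
  assumes cv: "\<And>t1 t2 l. t1 \<in> {0..1} \<Longrightarrow> t2 \<in> {0..1} \<Longrightarrow> l \<in> {0..1} \<Longrightarrow>
      g (l * t1 + (1 - l) * t2) \<le> l * g t1 + (1 - l) * g t2"
    and "0 \<le> p" "p < q" "q < s" "s \<le> 1"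
  shows "(g q - g p) / (q - p) \<le> (g s - g p) / (s - p)"
    and "(g s - g p) / (s - p) \<le> (g s - g q) / (s - q)"
proof -
  define l where "l = (s - q) / (s - p)"
  have l01: "l \<in> {0..1}" using assms by (auto simp: l_def field_simps)
  have lsp: "l * (s - p) = s - q" using assms by (simp add: l_def)
  have "l * p + (1 - l) * s = q" using lsp by (simp add: algebra_simps)
  then have gq: "g q \<le> l * g p + (1 - l) * g s" using cv[of p s l] l01 assms by auto
  have sp: "s - p > 0" using assms by simp
  have "(s - p) * g q \<le> (s - p) * (l * g p + (1 - l) * g s)"
    using gq sp by (simp add: mult_left_mono)
  also have "(s - p) * (l * g p + (1 - l) * g s) = (l * (s - p)) * g p + ((s - p) - l * (s - p)) * g s"
    by (simp add: algebra_simps)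
  also have "\<dots> = (s - q) * g p + (q - p) * g s" unfolding lsp by simp
  finally have gq'': "(s - p) * g q \<le> (s - q) * g p + (q - p) * g s" .
  have k1: "(g q - g p) * (s - p) \<le> (g s - g p) * (q - p)"
    using gq'' by (simp add: algebra_simps)
  have k2: "(g s - g p) * (s - q) \<le> (g s - g q) * (s - p)"
    using gq'' by (simp add: algebra_simps)
  show "(g q - g p) / (q - p) \<le> (g s - g p) / (s - p)"
    using assms k1 by (simp add: divide_simps)
  show "(g s - g p) / (s - p) \<le> (g s - g q) / (s - q)"
    using assms k2 by (simp add: divide_simps)
qed

lemma slope_mono2:
  fixes g :: "real \<Rightarrow> real"
  assumes cv: "\<And>t1 t2 l. t1 \<in> {0..1} \<Longrightarrow> t2 \<in> {0..1} \<Longrightarrow> l \<in> {0..1} \<Longrightarrow>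
      g (l * t1 + (1 - l) * t2) \<le> l * g t1 + (1 - l) * g t2"
    and "0 \<le> p" "p \<le> r" "h > 0" "r + h \<le> 1"
  shows "g (p + h) - g p \<le> g (r + h) - g r"
proof -
  have s1: "(g (p+h) - g p) / h \<le> (g (r+h) - g p) / (r + h - p)"
  proof (cases "p + h < r + h")
    case True
    then show ?thesis using slope_mono(1)[OF cv, of p "p+h" "r+h"] assms by auto
  next
    case False
    then have "r = p" using assms by auto
    then show ?thesis by simp
  qed
  have s2: "(g (r+h) - g p) / (r + h - p) \<le> (g (r+h) - g r) / h"
  proof (cases "p < r")
    case True
    then show ?thesis using slope_mono(2)[OF cv, of p r "r+h"] assms by auto
  next
    case False
    then have "r = p" using assms by auto
    then show ?thesis by simp
  qed
  from s1 s2 have "(g (p+h) - g p) / h \<le> (g (r+h) - g r) / h" by linarith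
  then show ?thesis using assms(4) by (simp add: divide_right_mono_neg divide_le_cancel)
qed



locale seg =
  fixes F :: "real^'n \<Rightarrow> interval" and X :: "(real^'n) set" and x y :: "real^'n"
    and G :: "real^'n \<Rightarrow> interval" and \<sigma> M :: real
  assumes xX: "x \<in> X" and yX: "y \<in> X" and convX: "convex X"
    and Gc: "convex_ivf_on X G" and sig: "\<sigma> > 0"
    and Frep: "\<forall>z\<in>X. F z = iplus (G z) (iscale (1/2 * (norm z)\<^sup>2) (\<sigma>, \<sigma>))"
    and diff: "\<forall>z\<in>X. gH_differentiable_at F z"
    and Mpos: "M > 0"
    and lip: "\<forall>p\<in>X. \<forall>q\<in>X. inorm_vec (gHminus_vec (gH_gradient F p) (gH_gradient F q)) \<le> M * norm (p - q)"
    and xy: "x \<noteq> y"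
begin

definition "u = y - x"
definition "zz t = x + t *\<^sub>R u"
definition "a t k = fst (gH_partial F (zz t) k)"
definition "b t k = snd (gH_partial F (zz t) k)"
definition "P t = PPz F (zz t) u"
definition "Q t = QQz F (zz t) u"
definition "lo t = fst (F (zz t))"
definition "hi t = snd (F (zz t))"
definition "c = \<sigma> * (norm u)\<^sup>2"

lemma u_nz: "norm u > 0" using xy by (simp add: u_def)

lemma zzX: "t \<in> {0..1} \<Longrightarrow> zz t \<in> X"
proof -
  assume t: "t \<in> {0..1}"
  have "zz t = (1 - t) *\<^sub>R x + t *\<^sub>R y" by (simp add: zz_def u_def algebra_simps)
  then show ?thesis using convX xX yX t unfolding convex_def by auto
qed

lemma ab: "t \<in> {0..1} \<Longrightarrow> a t k \<le> b t k"
  using gh_diff_approx(1)[of F "zz t"] diff zzX unfolding a_def b_def by blast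

lemma appr: "t \<in> {0..1} \<Longrightarrow> approx_at F (zz t) (PPz F (zz t)) (QQz F (zz t))"
  using gh_diff_approx' diff zzX by blast

lemma zz_comb: "zz (l * t1 + (1 - l) * t2) = l *\<^sub>R zz t1 + (1 - l) *\<^sub>R zz t2"
  by (simp add: zz_def algebra_simps)

lemma zz_add: "zz t + h *\<^sub>R u = zz (t + h)"
  by (simp add: zz_def algebra_simps)

lemma norm_zz: "(norm (zz t))\<^sup>2 = (norm x)\<^sup>2 + 2 * t * (x \<bullet> u) + t\<^sup>2 * (norm u)\<^sup>2"
  unfolding power2_norm_eq_inner
  by (simp add: zz_def inner_add_left inner_add_right inner_commute algebra_simps power2_eq_square)

lemma conv_fst: "\<And>t1 t2 l. t1 \<in> {0..1} \<Longrightarrow> t2 \<in> {0..1} \<Longrightarrow> l \<in> {0..1} \<Longrightarrow>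
      fst (G (zz (l * t1 + (1 - l) * t2))) \<le> l * fst (G (zz t1)) + (1 - l) * fst (G (zz t2))"
  and conv_snd: "\<And>t1 t2 l. t1 \<in> {0..1} \<Longrightarrow> t2 \<in> {0..1} \<Longrightarrow> l \<in> {0..1} \<Longrightarrow>
      snd (G (zz (l * t1 + (1 - l) * t2))) \<le> l * snd (G (zz t1)) + (1 - l) * snd (G (zz t2))"
proof -
  fix t1 t2 l :: real assume h: "t1 \<in> {0..1}" "t2 \<in> {0..1}" "l \<in> {0..1}"
  have "ile (G (l *\<^sub>R zz t1 + (1 - l) *\<^sub>R zz t2)) (iplus (iscale l (G (zz t1))) (iscale (1 - l) (G (zz t2))))"
    using Gc zzX h unfolding convex_ivf_on_def by blast
  then have "ile (G (zz (l * t1 + (1 - l) * t2))) (iplus (iscale l (G (zz t1))) (iscale (1 - l) (G (zz t2))))"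
    by (simp add: zz_comb)
  then show "fst (G (zz (l * t1 + (1 - l) * t2))) \<le> l * fst (G (zz t1)) + (1 - l) * fst (G (zz t2))"
    and "snd (G (zz (l * t1 + (1 - l) * t2))) \<le> l * snd (G (zz t1)) + (1 - l) * snd (G (zz t2))"
    using h by (auto simp: ile_def iplus_def iscale_def)
qed

lemma lo_eq: "t \<in> {0..1} \<Longrightarrow> lo t = fst (G (zz t)) + \<sigma>/2 * (norm (zz t))\<^sup>2"
  and hi_eq: "t \<in> {0..1} \<Longrightarrow> hi t = snd (G (zz t)) + \<sigma>/2 * (norm (zz t))\<^sup>2"
  using Frep zzX by (auto simp: lo_def hi_def iplus_def iscale_def)

lemma quad_id: "\<sigma>/2 * (norm (zz (r+h)))\<^sup>2 - \<sigma>/2 * (norm (zz r))\<^sup>2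
     - (\<sigma>/2 * (norm (zz (p+h)))\<^sup>2 - \<sigma>/2 * (norm (zz p))\<^sup>2) = c * h * (r - p)"
  unfolding norm_zz c_def by (simp add: algebra_simps power2_eq_square)

lemma step_ineq:
  assumes "0 \<le> p" "p \<le> r" "h > 0" "r + h \<le> 1"
  shows "lo (p + h) - lo p + c * h * (r - p) \<le> lo (r + h) - lo r"
    and "hi (p + h) - hi p + c * h * (r - p) \<le> hi (r + h) - hi r"
proof -
  have ins: "p \<in> {0..1}" "p + h \<in> {0..1}" "r \<in> {0..1}" "r + h \<in> {0..1}" using assms by auto
  have g1: "fst (G (zz (p + h))) - fst (G (zz p)) \<le> fst (G (zz (r + h))) - fst (G (zz r))"
    using slope_mono2[of "\<lambda>t. fst (G (zz t))", OF conv_fst] assms by blast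
  have g2: "snd (G (zz (p + h))) - snd (G (zz p)) \<le> snd (G (zz (r + h))) - snd (G (zz r))"
    using slope_mono2[of "\<lambda>t. snd (G (zz t))", OF conv_snd] assms by blast
  show "lo (p + h) - lo p + c * h * (r - p) \<le> lo (r + h) - lo r"
    using g1 quad_id[of r h p] ins by (simp add: lo_eq)
  show "hi (p + h) - hi p + c * h * (r - p) \<le> hi (r + h) - hi r"
    using g2 quad_id[of r h p] ins by (simp add: hi_eq)
qed

lemma c_nonneg: "c \<ge> 0" using sig by (simp add: c_def)

lemma PQ_mono:
  assumes t: "0 \<le> t1" "t1 < t2" "t2 \<le> 1"
  shows "P t1 + c * (t2 - t1) \<le> P t2 \<and> Q t1 + c * (t2 - t1) \<le> Q t2"
proof -
  define nu where "nu = norm u"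
  have nu: "nu > 0" using u_nz by (simp add: nu_def)
  have "P t1 + c * (t2 - t1) \<le> P t2 + e \<and> Q t1 + c * (t2 - t1) \<le> Q t2 + e" if e: "e > 0" for e
  proof -
    define e1 where "e1 = e / (2*nu + c + 1)"
    have e1: "e1 > 0" using e nu c_nonneg by (simp add: e1_def)
    have e1e: "e1 * (2*nu + c) \<le> e"
    proof -
      have "e1 * (2*nu + c + 1) = e" using nu c_nonneg by (simp add: e1_def)
      then show ?thesis using e1 by (simp add: algebra_simps)
    qed
    obtain r1 where r1: "r1 > 0" and rr1: "\<And>d. norm d < r1 \<Longrightarrow>
       \<bar>min (fst (F (zz t1+d)) - fst (F (zz t1))) (snd (F (zz t1+d)) - snd (F (zz t1))) - PPz F (zz t1) d\<bar> \<le> e1 * norm d \<and>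
       \<bar>max (fst (F (zz t1+d)) - fst (F (zz t1))) (snd (F (zz t1+d)) - snd (F (zz t1))) - QQz F (zz t1) d\<bar> \<le> e1 * norm d"
      using appr[of t1] t e1 unfolding approx_at_def by auto
    obtain r2 where r2: "r2 > 0" and rr2: "\<And>d. norm d < r2 \<Longrightarrow>
       \<bar>min (fst (F (zz t2+d)) - fst (F (zz t2))) (snd (F (zz t2+d)) - snd (F (zz t2))) - PPz F (zz t2) d\<bar> \<le> e1 * norm d \<and>
       \<bar>max (fst (F (zz t2+d)) - fst (F (zz t2))) (snd (F (zz t2+d)) - snd (F (zz t2))) - QQz F (zz t2) d\<bar> \<le> e1 * norm d"
      using appr[of t2] t e1 unfolding approx_at_def by auto
    define h where "h = min (t2 - t1) (min e1 (min (r1/(2*nu)) (r2/(2*nu))))"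
    have h0: "h > 0" using t e1 r1 r2 nu by (simp add: h_def)
    have hle: "h \<le> t2 - t1" "h \<le> e1" "h \<le> r1/(2*nu)" "h \<le> r2/(2*nu)" by (auto simp: h_def)
    have hn1: "h * nu < r1"
    proof -
      have "h * nu \<le> r1 / 2" using hle(3) nu by (simp add: field_simps)
      then show ?thesis using r1 by linarith
    qed
    have hn2: "h * nu < r2"
    proof -
      have "h * nu \<le> r2 / 2" using hle(4) nu by (simp add: field_simps)
      then show ?thesis using r2 by linarith
    qed
    have nd1: "norm (h *\<^sub>R u) = h * nu" using h0 by (simp add: nu_def)
    have nd2: "norm (- (h *\<^sub>R u)) = h * nu" using h0 by (simp add: nu_def)
    have z1: "zz t1 + h *\<^sub>R u = zz (t1 + h)" by (rule zz_add)
    have z2: "zz t2 + - (h *\<^sub>R u) = zz (t2 - h)" by (simp add: zz_def algebra_simps)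
    have pp1: "PPz F (zz t1) (h *\<^sub>R u) = h * P t1" "QQz F (zz t1) (h *\<^sub>R u) = h * Q t1"
      using h0 by (simp_all add: PPz_scale QQz_scale P_def Q_def)
    have pp2: "PPz F (zz t2) (- (h *\<^sub>R u)) = - (h * Q t2)" "QQz F (zz t2) (- (h *\<^sub>R u)) = - (h * P t2)"
      using h0 by (simp_all add: PPz_neg QQz_neg PPz_scale QQz_scale P_def Q_def)
    have F1: "\<bar>min (lo (t1+h) - lo t1) (hi (t1+h) - hi t1) - h * P t1\<bar> \<le> e1 * (h * nu)"
         "\<bar>max (lo (t1+h) - lo t1) (hi (t1+h) - hi t1) - h * Q t1\<bar> \<le> e1 * (h * nu)"
      using rr1[of "h *\<^sub>R u"] hn1 unfolding nd1 z1 pp1 lo_def hi_def by auto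
    have B1: "\<bar>min (lo (t2-h) - lo t2) (hi (t2-h) - hi t2) + h * Q t2\<bar> \<le> e1 * (h * nu)"
         "\<bar>max (lo (t2-h) - lo t2) (hi (t2-h) - hi t2) + h * P t2\<bar> \<le> e1 * (h * nu)"
      using rr2[of "- (h *\<^sub>R u)"] hn2 unfolding nd2 z2 pp2 lo_def hi_def by auto
    have st: "lo (t1 + h) - lo t1 + c * h * (t2 - h - t1) \<le> lo (t2 - h + h) - lo (t2 - h)"
             "hi (t1 + h) - hi t1 + c * h * (t2 - h - t1) \<le> hi (t2 - h + h) - hi (t2 - h)"
      using step_ineq[of t1 "t2 - h" h] t hle h0 by auto
    have mn: "min (lo (t1+h) - lo t1) (hi (t1+h) - hi t1) + c * h * (t2 - h - t1)
        \<le> - max (lo (t2-h) - lo t2) (hi (t2-h) - hi t2)"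
      using st by (simp add: min_def max_def)
    have mx: "max (lo (t1+h) - lo t1) (hi (t1+h) - hi t1) + c * h * (t2 - h - t1)
        \<le> - min (lo (t2-h) - lo t2) (hi (t2-h) - hi t2)"
      using st by (simp add: min_def max_def)
    have ex: "c * h * (t2 - h - t1) = h * (c * (t2 - t1)) - c * h * h" by (simp add: algebra_simps)
    have chh: "c * h * h \<le> c * h * e1" using hle(2) c_nonneg h0 by (simp add: mult_left_mono)
    have fin: "2 * (e1 * (h * nu)) + c * h * e1 \<le> h * e"
    proof -
      have "h * (e1 * (2*nu + c)) \<le> h * e" using e1e h0 by (simp add: mult_left_mono)
      then show ?thesis by (simp add: algebra_simps)
    qed
    have "h * (P t1 + c * (t2 - t1)) \<le> h * (P t2 + e)"
      using F1(1) B1(2) mn ex chh fin by (simp add: algebra_simps abs_le_iff; linarith)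
    moreover have "h * (Q t1 + c * (t2 - t1)) \<le> h * (Q t2 + e)"
      using F1(2) B1(1) mx ex chh fin by (simp add: algebra_simps abs_le_iff; linarith)
    ultimately show ?thesis using h0 by (simp add: mult_le_cancel_left_pos)
  qed
  then show ?thesis
    by (meson field_le_epsilon)
qed

end


lemma baire_interval:
  fixes E :: "nat \<Rightarrow> real set"
  assumes ab: "\<alpha> < \<beta>" and cov: "{\<alpha>..\<beta>} \<subseteq> (\<Union>n. E n)"
  shows "\<exists>n p q. p < q \<and> {p..q} \<subseteq> closure (E n)"
proof (rule ccontr)
  assume na: "\<not> ?thesis"
  define T where "T n = {\<alpha>..\<beta>} \<inter> - closure (E n)" for n
  have "{\<alpha>..\<beta>} \<subseteq> closure (\<Inter>(range T))"
  proof (rule Baire)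
    show "closed {\<alpha>..\<beta>}" by simp
    show "countable (range T)" by simp
    fix S assume "S \<in> range T"
    then obtain n where S: "S = T n" by auto
    show "openin (top_of_set {\<alpha>..\<beta>}) S \<and> {\<alpha>..\<beta>} \<subseteq> closure S"
    proof
      show "openin (top_of_set {\<alpha>..\<beta>}) S" unfolding S T_def by (rule openin_open_Int) auto
      show "{\<alpha>..\<beta>} \<subseteq> closure S"
      proof
        fix p assume p: "p \<in> {\<alpha>..\<beta>}"
        show "p \<in> closure S"
          unfolding closure_approachable
        proof (intro allI impI)
          fix e :: real assume e: "e > 0"
          define p1 where "p1 = max \<alpha> (p - e/2)"
          define q1 where "q1 = min \<beta> (p + e/2)"
          have "p1 < q1" using ab p e by (auto simp: p1_def q1_def)
          then have "\<not> {p1..q1} \<subseteq> closure (E n)" using na by blast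
          then obtain y where y: "y \<in> {p1..q1}" "y \<notin> closure (E n)" by blast
          have "y \<in> S" using y ab by (auto simp: S T_def p1_def q1_def)
          moreover have "dist y p < e" using y e by (auto simp: p1_def q1_def dist_real_def)
          ultimately show "\<exists>y\<in>S. dist y p < e" by blast
        qed
      qed
    qed
  qed
  then have "\<alpha> \<in> closure (\<Inter>(range T))" using ab by auto
  then have "\<Inter>(range T) \<noteq> {}" by auto
  then obtain y where y: "\<And>n. y \<in> T n" by auto
  then have "y \<in> {\<alpha>..\<beta>}" by (auto simp: T_def)
  then obtain n where "y \<in> E n" using cov by auto
  then have "y \<in> closure (E n)" using closure_subset by auto
  then show False using y[of n] by (auto simp: T_def)
qed

lemma close_pair:
  fixes E :: "real set"
  assumes "p < q" "{p..q} \<subseteq> closure E" "\<eta> > 0"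
  shows "\<exists>t t'. t \<in> E \<and> t' \<in> E \<and> t < t' \<and> t' - t < \<eta>"
proof -
  define m where "m = (p + q) / 2"
  define l where "l = min \<eta> (q - p) / 4"
  have l: "l > 0" using assms by (simp add: l_def)
  have "m \<in> {p..q}" using assms by (simp add: m_def)
  then have m: "m \<in> closure E" using assms(2) by blast
  have m2: "m + 2*l \<in> closure E"
  proof -
    have "m + 2 * l \<le> q" unfolding m_def l_def by (auto simp: min_def field_simps)
    moreover have "p \<le> m + 2 * l" using assms l unfolding m_def by (simp add: field_simps)
    ultimately have "m + 2*l \<in> {p..q}" by simp
    then show ?thesis using assms(2) by blast
  qed
  obtain t where t: "t \<in> E" "dist t m < l" using m l unfolding closure_approachable by blast
  obtain t' where t': "t' \<in> E" "dist t' (m + 2*l) < l" using m2 l unfolding closure_approachable by blast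
  have "t < t'" "t' - t < 4 * l" using t t' by (auto simp: dist_real_def)
  moreover have "4 * l \<le> \<eta>" by (simp add: l_def)
  ultimately show ?thesis using t t' by (intro exI[of _ t] exI[of _ t']) auto
qed

lemma three_abs:
  fixes K1 K2 K3 :: real
  assumes "K1 = K2 + K3"
  shows "\<bar>K1\<bar> = \<bar>K2\<bar> + \<bar>K3\<bar> \<or> \<bar>K2\<bar> = \<bar>K1\<bar> + \<bar>K3\<bar> \<or> \<bar>K3\<bar> = \<bar>K1\<bar> + \<bar>K2\<bar>"
  using assms by (auto simp: abs_if)

lemma term1: "\<bar>U/2 + V\<bar> + \<bar>-U/2 + V\<bar> - \<bar>U\<bar> \<ge> (0::real)"
  and term2: "\<bar>U\<bar> - \<bar>U/2 + V\<bar> + \<bar>-U/2 + V\<bar> \<ge> (0::real)"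
  and term3: "\<bar>U\<bar> + \<bar>U/2 + V\<bar> - \<bar>-U/2 + V\<bar> \<ge> (0::real)"
  by (auto simp: abs_if)



lemma inorm_ge: "\<bar>fst A - fst B\<bar> \<le> inorm (gHminus A B) \<and> \<bar>snd A - snd B\<bar> \<le> inorm (gHminus A B)"
  using abs_le_minmax[of "fst A - fst B" "snd A - snd B"] by (simp add: inorm_def gHminus_def)

lemma inorm_nonneg: "inorm A \<ge> 0" by (simp add: inorm_def)

lemma inorm_le_vec: "inorm (V $ i) \<le> inorm_vec V"
  unfolding inorm_vec_def by (rule member_le_sum) (auto simp: inorm_nonneg)

lemma lin_contra:
  fixes X1 X2 X3 F G G' N c :: real
  assumes "X1 = X2 + X3 \<or> X2 = X1 + X3 \<or> X3 = X1 + X2"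
    "\<bar>X1 - F\<bar> \<le> c / 10" "\<bar>X2 - G'\<bar> \<le> c / 10" "\<bar>X3 - N\<bar> \<le> c / 10" "\<bar>G' - G\<bar> \<le> c / 4"
    "F + G - N \<ge> c" "N - F + G \<ge> c" "N + F - G \<ge> c" "c > 0"
  shows False
  using assms(1)
proof (elim disjE)
  assume "X1 = X2 + X3" then show False using assms(2-9) unfolding abs_le_iff by linarith
next
  assume "X2 = X1 + X3" then show False using assms(2-9) unfolding abs_le_iff by linarith
next
  assume "X3 = X1 + X2" then show False using assms(2-9) unfolding abs_le_iff by linarith
qed

context seg begin

definition "rho t m = b t m - a t m"
definition "Nt t d = (\<Sum>m\<in>UNIV. rho t m * \<bar>d $ m\<bar>)"
definition "wd z = snd (F z) - fst (F z)"

lemma rho_nonneg: "t \<in> {0..1} \<Longrightarrow> rho t m \<ge> 0" using ab by (simp add: rho_def)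

lemma ab_lip:
  assumes "t \<in> {0..1}" "t' \<in> {0..1}"
  shows "\<bar>a t k - a t' k\<bar> \<le> M * norm u * \<bar>t - t'\<bar> \<and> \<bar>b t k - b t' k\<bar> \<le> M * norm u * \<bar>t - t'\<bar>"
proof -
  have "inorm (gHminus (gH_partial F (zz t) k) (gH_partial F (zz t') k))
       \<le> inorm_vec (gHminus_vec (gH_gradient F (zz t)) (gH_gradient F (zz t')))"
    using inorm_le_vec[of "gHminus_vec (gH_gradient F (zz t)) (gH_gradient F (zz t'))" k]
    by (simp add: gHminus_vec_def gH_gradient_def)
  also have "\<dots> \<le> M * norm (zz t - zz t')" using lip zzX assms by blast
  also have "norm (zz t - zz t') = \<bar>t - t'\<bar> * norm u"
  proof -
    have "zz t - zz t' = (t - t') *\<^sub>R u" by (simp add: zz_def algebra_simps)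
    then show ?thesis by simp
  qed
  finally show ?thesis using inorm_ge[of "gH_partial F (zz t) k" "gH_partial F (zz t') k"]
    by (auto simp: a_def b_def algebra_simps)
qed

lemma rho_lip:
  assumes "t \<in> {0..1}" "t' \<in> {0..1}"
  shows "\<bar>rho t m - rho t' m\<bar> \<le> 2 * M * norm u * \<bar>t - t'\<bar>"
  using ab_lip[OF assms, of m] by (auto simp: rho_def abs_le_iff)

lemma width_appr:
  assumes t: "t \<in> {0..1}" and e: "e > 0"
  shows "\<exists>r>0. \<forall>d. norm d < r \<longrightarrow> \<bar>\<bar>wd (zz t + d) - wd (zz t)\<bar> - Nt t d\<bar> \<le> 2 * e * norm d"
proof -
  obtain r where r: "r > 0" and rr: "\<And>d. norm d < r \<Longrightarrow>
       \<bar>min (fst (F (zz t+d)) - fst (F (zz t))) (snd (F (zz t+d)) - snd (F (zz t))) - PPz F (zz t) d\<bar> \<le> e * norm d \<and>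
       \<bar>max (fst (F (zz t+d)) - fst (F (zz t))) (snd (F (zz t+d)) - snd (F (zz t))) - QQz F (zz t) d\<bar> \<le> e * norm d"
    using appr[OF t] e unfolding approx_at_def by auto
  have QP: "QQz F (zz t) d - PPz F (zz t) d = Nt t d" for d
    unfolding QQz_def PPz_def Nt_def sum_subtractf[symmetric]
  proof (rule sum.cong)
    fix m :: 'n
    have "a t m \<le> b t m" using ab t by auto
    then show "max (d $ m * fst (gH_partial F (zz t) m)) (d $ m * snd (gH_partial F (zz t) m)) -
         min (d $ m * fst (gH_partial F (zz t) m)) (d $ m * snd (gH_partial F (zz t) m)) =
         rho t m * \<bar>d $ m\<bar>"
      unfolding rho_def a_def[symmetric] b_def[symmetric]
      by (cases "d $ m \<ge> 0") (auto simp: min_def max_def mult_left_mono mult_left_mono_neg algebra_simps abs_if)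
  qed simp
  have wd: "\<bar>wd (zz t + d) - wd (zz t)\<bar> = max (fst (F (zz t+d)) - fst (F (zz t))) (snd (F (zz t+d)) - snd (F (zz t)))
       - min (fst (F (zz t+d)) - fst (F (zz t))) (snd (F (zz t+d)) - snd (F (zz t)))" for d
    by (simp add: wd_def min_def max_def abs_if)
  show ?thesis
  proof (intro exI[of _ r] conjI[of "0 < r"] allI impI)
    show "0 < r" by fact
    fix d :: "real^'n" assume nd: "norm d < r"
    define A where "A = max (fst (F (zz t+d)) - fst (F (zz t))) (snd (F (zz t+d)) - snd (F (zz t)))"
    define B where "B = min (fst (F (zz t+d)) - fst (F (zz t))) (snd (F (zz t+d)) - snd (F (zz t)))"
    have b1: "\<bar>B - PPz F (zz t) d\<bar> \<le> e * norm d" and b2: "\<bar>A - QQz F (zz t) d\<bar> \<le> e * norm d"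
      using rr[OF nd] unfolding A_def B_def by auto
    have "\<bar>\<bar>wd (zz t + d) - wd (zz t)\<bar> - Nt t d\<bar> = \<bar>(A - QQz F (zz t) d) - (B - PPz F (zz t) d)\<bar>"
      unfolding wd QP[symmetric] A_def B_def by (simp add: algebra_simps)
    also have "\<dots> \<le> \<bar>A - QQz F (zz t) d\<bar> + \<bar>B - PPz F (zz t) d\<bar>" by (rule abs_triangle_ineq4)
    also have "\<dots> \<le> 2 * e * norm d" using b1 b2 by simp
    finally show "\<bar>\<bar>wd (zz t + d) - wd (zz t)\<bar> - Nt t d\<bar> \<le> 2 * e * norm d" .
  qed
qed

lemma single_spread:
  assumes t0: "t0 \<in> {0..1}" and ij: "i \<noteq> j" and ui: "u $ i \<noteq> 0" and uj: "u $ j \<noteq> 0"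
  shows "a t0 i = b t0 i \<or> a t0 j = b t0 j"
proof (rule ccontr)
  assume "\<not> ?thesis"
  then have ri: "rho t0 i > 0" and rj: "rho t0 j > 0" using ab[OF t0, of i] ab[OF t0, of j]
    by (auto simp: rho_def)
  define nu where "nu = norm u"
  have nu: "nu > 0" using u_nz by (simp add: nu_def)
  define r0 where "r0 = min (rho t0 i) (rho t0 j) / 2"
  have r0: "r0 > 0" using ri rj by (simp add: r0_def)
  define K where "K = 2 * M * nu + 1"
  have "2 * M * nu > 0" using Mpos nu by simp
  then have K: "K > 0" by (simp add: K_def)
  define l where "l = r0 / K"
  have l: "l > 0" using r0 K by (simp add: l_def)
  define \<alpha> where "\<alpha> = max 0 (t0 - l)"
  define \<beta> where "\<beta> = min 1 (t0 + l)"
  have ab_lt: "\<alpha> < \<beta>" using t0 l by (auto simp: \<alpha>_def \<beta>_def)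
  have rho_lip': "\<bar>rho t m - rho t' m\<bar> \<le> K * \<bar>t - t'\<bar>" if "t \<in> {0..1}" "t' \<in> {0..1}" for t t' m
  proof -
    have "\<bar>rho t m - rho t' m\<bar> \<le> 2 * M * nu * \<bar>t - t'\<bar>" using rho_lip[OF that] by (simp add: nu_def)
    also have "\<dots> \<le> K * \<bar>t - t'\<bar>" by (simp add: K_def mult_right_mono)
    finally show ?thesis .
  qed
  have inI: "t \<in> {0..1}" if "t \<in> {\<alpha>..\<beta>}" for t using that by (auto simp: \<alpha>_def \<beta>_def)
  have rlow: "rho t i \<ge> r0 \<and> rho t j \<ge> r0" if tt: "t \<in> {\<alpha>..\<beta>}" for t
  proof -
    have "\<bar>t - t0\<bar> \<le> l" using tt by (auto simp: \<alpha>_def \<beta>_def)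
    then have "K * \<bar>t - t0\<bar> \<le> r0" using K by (simp add: l_def field_simps)
    moreover have "\<bar>rho t i - rho t0 i\<bar> \<le> K * \<bar>t - t0\<bar>" "\<bar>rho t j - rho t0 j\<bar> \<le> K * \<bar>t - t0\<bar>"
      using rho_lip' inI[OF tt] t0 by auto
    moreover have "rho t0 i \<ge> 2 * r0" "rho t0 j \<ge> 2 * r0" by (auto simp: r0_def)
    ultimately show ?thesis by (auto simp: abs_le_iff)
  qed
  define U1 where "U1 = (\<Sum>m\<in>UNIV. \<bar>u $ m\<bar>)"
  have U1i: "\<bar>u $ i\<bar> \<le> U1" unfolding U1_def by (rule member_le_sum) auto
  have U1: "U1 > 0" using U1i ui by linarith
  have nuU1: "nu \<le> U1" unfolding nu_def U1_def by (rule norm_le_l1_cart)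
  define \<gamma> where "\<gamma> = 2 * r0 * min \<bar>u $ i\<bar> \<bar>u $ j\<bar>"
  have \<gamma>: "\<gamma> > 0" using r0 ui uj by (simp add: \<gamma>_def)
  define \<epsilon>0 where "\<epsilon>0 = \<gamma> / (40 * U1)"
  have \<epsilon>0: "\<epsilon>0 > 0" using \<gamma> U1 by (simp add: \<epsilon>0_def)
  define E where "E n = {t \<in> {\<alpha>..\<beta>}. \<forall>d. norm d < 1 / real (Suc n) \<longrightarrow>
      \<bar>\<bar>wd (zz t + d) - wd (zz t)\<bar> - Nt t d\<bar> \<le> 2 * \<epsilon>0 * norm d}" for n
  have cov: "{\<alpha>..\<beta>} \<subseteq> (\<Union>n. E n)"
  proof
    fix t assume tt: "t \<in> {\<alpha>..\<beta>}"
    obtain r where r: "r > 0" and rr: "\<forall>d. norm d < r \<longrightarrow> \<bar>\<bar>wd (zz t + d) - wd (zz t)\<bar> - Nt t d\<bar> \<le> 2 * \<epsilon>0 * norm d"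
      using width_appr[OF inI[OF tt] \<epsilon>0] by auto
    obtain n where n: "inverse (real (Suc n)) < r" using reals_Archimedean[OF r] by auto
    have n': "1 / real (Suc n) < r" using n by (simp add: inverse_eq_divide)
    have "\<forall>d. norm d < 1 / real (Suc n) \<longrightarrow> \<bar>\<bar>wd (zz t + d) - wd (zz t)\<bar> - Nt t d\<bar> \<le> 2 * \<epsilon>0 * norm d"
    proof (intro allI impI)
      fix d :: "real^'n" assume "norm d < 1 / real (Suc n)"
      then have "norm d < r" using n' by linarith
      then show "\<bar>\<bar>wd (zz t + d) - wd (zz t)\<bar> - Nt t d\<bar> \<le> 2 * \<epsilon>0 * norm d" using rr by blast
    qed
    then have "t \<in> E n" using tt unfolding E_def by blast
    then show "t \<in> (\<Union>n. E n)" by auto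
  qed
  obtain n p q where pq: "p < q" "{p..q} \<subseteq> closure (E n)"
    using baire_interval[OF ab_lt cov] by auto
  define \<eta> where "\<eta> = min (\<gamma> / (8 * K * U1)) ((1 / real (Suc n)) / (2 * U1))"
  have \<eta>: "\<eta> > 0" using \<gamma> K U1 by (simp add: \<eta>_def)
  obtain t t' where tt: "t \<in> E n" "t' \<in> E n" "t < t'" "t' - t < \<eta>"
    using close_pair[OF pq \<eta>] by auto
  define h where "h = t' - t"
  have h: "h > 0" "h < \<gamma> / (8 * K * U1)" "h < (1 / real (Suc n)) / (2 * U1)"
    using tt by (auto simp: h_def \<eta>_def)
  have tI: "t \<in> {\<alpha>..\<beta>}" "t' \<in> {\<alpha>..\<beta>}" using tt by (auto simp: E_def)
  define vv where "vv m = (if m = i then u $ i else if m = j then - (u $ j) else 0)" for m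
  have vvb: "\<bar>vv m\<bar> \<le> \<bar>u $ m\<bar>" for m by (simp add: vv_def)
  define d where "d = (\<chi> m. h * (u $ m / 2 + vv m) :: real^'n)"
  define d' where "d' = (\<chi> m. h * (- u $ m / 2 + vv m) :: real^'n)"
  have zeq: "zz t' + d' = zz t + d" "zz t + h *\<^sub>R u = zz t'"
    by (auto simp: vec_eq_iff zz_def d_def d'_def h_def algebra_simps)
  have s1: "(\<Sum>m\<in>UNIV. \<bar>u $ m / 2 + vv m\<bar>) \<le> 2 * U1"
  proof -
    have "(\<Sum>m\<in>UNIV. \<bar>u $ m / 2 + vv m\<bar>) \<le> (\<Sum>m\<in>UNIV. 2 * \<bar>u $ m\<bar>)"
    proof (rule sum_mono)
      fix m :: 'n
      have "\<bar>u $ m / 2 + vv m\<bar> \<le> \<bar>u $ m / 2\<bar> + \<bar>vv m\<bar>" by (rule abs_triangle_ineq)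
      then show "\<bar>u $ m / 2 + vv m\<bar> \<le> 2 * \<bar>u $ m\<bar>" using vvb[of m] by simp
    qed
    then show ?thesis by (simp add: U1_def sum_distrib_left)
  qed
  have s2: "(\<Sum>m\<in>UNIV. \<bar>- u $ m / 2 + vv m\<bar>) \<le> 2 * U1"
  proof -
    have "(\<Sum>m\<in>UNIV. \<bar>- u $ m / 2 + vv m\<bar>) \<le> (\<Sum>m\<in>UNIV. 2 * \<bar>u $ m\<bar>)"
    proof (rule sum_mono)
      fix m :: 'n
      have "\<bar>- u $ m / 2 + vv m\<bar> \<le> \<bar>- u $ m / 2\<bar> + \<bar>vv m\<bar>" by (rule abs_triangle_ineq)
      then show "\<bar>- u $ m / 2 + vv m\<bar> \<le> 2 * \<bar>u $ m\<bar>" using vvb[of m] by simp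
    qed
    then show ?thesis by (simp add: U1_def sum_distrib_left)
  qed
  have nd: "norm d \<le> h * (2 * U1)"
  proof -
    have "norm d \<le> (\<Sum>m\<in>UNIV. \<bar>d $ m\<bar>)" by (rule norm_le_l1_cart)
    also have "\<dots> = h * (\<Sum>m\<in>UNIV. \<bar>u $ m / 2 + vv m\<bar>)"
      using h by (simp add: d_def abs_mult sum_distrib_left)
    also have "\<dots> \<le> h * (2 * U1)" using s1 h by (simp add: mult_left_mono)
    finally show ?thesis .
  qed
  have nd': "norm d' \<le> h * (2 * U1)"
  proof -
    have "norm d' \<le> (\<Sum>m\<in>UNIV. \<bar>d' $ m\<bar>)" by (rule norm_le_l1_cart)
    also have "\<dots> = h * (\<Sum>m\<in>UNIV. \<bar>- u $ m / 2 + vv m\<bar>)"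
      using h by (simp add: d'_def abs_mult sum_distrib_left)
    also have "\<dots> \<le> h * (2 * U1)" using s2 h by (simp add: mult_left_mono)
    finally show ?thesis .
  qed
  have ndu: "norm (h *\<^sub>R u) \<le> h * (2 * U1)" using h nuU1 U1 by (simp add: nu_def[symmetric])
  have small: "h * (2 * U1) < 1 / real (Suc n)"
  proof -
    have "0 < 2 * U1" using U1 by simp
    then show ?thesis using h(3) by (simp only: pos_less_divide_eq[symmetric])
  qed
  have Et: "\<forall>d. norm d < 1 / real (Suc n) \<longrightarrow> \<bar>\<bar>wd (zz t + d) - wd (zz t)\<bar> - Nt t d\<bar> \<le> 2 * \<epsilon>0 * norm d"
    using tt(1) unfolding E_def by blast
  have Et': "\<forall>d. norm d < 1 / real (Suc n) \<longrightarrow> \<bar>\<bar>wd (zz t' + d) - wd (zz t')\<bar> - Nt t' d\<bar> \<le> 2 * \<epsilon>0 * norm d"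
    using tt(2) unfolding E_def by blast
  have "norm d < 1 / real (Suc n)" using nd small by linarith
  then have A: "\<bar>\<bar>wd (zz t + d) - wd (zz t)\<bar> - Nt t d\<bar> \<le> 2 * \<epsilon>0 * norm d"
    using Et by blast
  have "norm d' < 1 / real (Suc n)" using nd' small by linarith
  then have B: "\<bar>\<bar>wd (zz t' + d') - wd (zz t')\<bar> - Nt t' d'\<bar> \<le> 2 * \<epsilon>0 * norm d'"
    using Et' by blast
  have "norm (h *\<^sub>R u) < 1 / real (Suc n)" using ndu small by linarith
  then have C: "\<bar>\<bar>wd (zz t + h *\<^sub>R u) - wd (zz t)\<bar> - Nt t (h *\<^sub>R u)\<bar> \<le> 2 * \<epsilon>0 * norm (h *\<^sub>R u)"
    using Et by blast
  define f where "f = (\<Sum>m\<in>UNIV. rho t m * \<bar>u $ m / 2 + vv m\<bar>)"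
  define g where "g = (\<Sum>m\<in>UNIV. rho t m * \<bar>- u $ m / 2 + vv m\<bar>)"
  define g' where "g' = (\<Sum>m\<in>UNIV. rho t' m * \<bar>- u $ m / 2 + vv m\<bar>)"
  define N where "N = (\<Sum>m\<in>UNIV. rho t m * \<bar>u $ m\<bar>)"
  have Nd: "Nt t d = h * f" unfolding Nt_def f_def sum_distrib_left
    by (rule sum.cong) (use h in \<open>simp_all add: d_def abs_mult mult_ac\<close>)
  have Nd': "Nt t' d' = h * g'" unfolding Nt_def g'_def sum_distrib_left
    by (rule sum.cong) (use h in \<open>simp_all add: d'_def abs_mult mult_ac\<close>)
  have Nu: "Nt t (h *\<^sub>R u) = h * N" unfolding Nt_def N_def sum_distrib_left
    by (rule sum.cong) (use h in \<open>simp_all add: abs_mult mult_ac\<close>)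
  have gg: "\<bar>g' - g\<bar> \<le> K * h * (2 * U1)"
  proof -
    have "\<bar>g' - g\<bar> = \<bar>\<Sum>m\<in>UNIV. (rho t' m - rho t m) * \<bar>- u $ m / 2 + vv m\<bar>\<bar>"
      by (simp add: g_def g'_def sum_subtractf[symmetric] algebra_simps)
    also have "\<dots> \<le> (\<Sum>m\<in>UNIV. \<bar>(rho t' m - rho t m) * \<bar>- u $ m / 2 + vv m\<bar>\<bar>)" by (rule sum_abs)
    also have "\<dots> \<le> (\<Sum>m\<in>UNIV. (K * h) * \<bar>- u $ m / 2 + vv m\<bar>)"
    proof (rule sum_mono)
      fix m :: 'n
      have "\<bar>rho t' m - rho t m\<bar> \<le> K * \<bar>t' - t\<bar>" using rho_lip' inI tI by blast
      then have "\<bar>rho t' m - rho t m\<bar> \<le> K * h" using h by (simp add: h_def)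
      then show "\<bar>(rho t' m - rho t m) * \<bar>- u $ m / 2 + vv m\<bar>\<bar> \<le> (K * h) * \<bar>- u $ m / 2 + vv m\<bar>"
        by (simp add: abs_mult mult_right_mono)
    qed
    also have "\<dots> = (K * h) * (\<Sum>m\<in>UNIV. \<bar>- u $ m / 2 + vv m\<bar>)" by (simp add: sum_distrib_left)
    also have "\<dots> \<le> (K * h) * (2 * U1)" using s2 K h by (simp add: mult_left_mono)
    finally show ?thesis by simp
  qed
  have rnn: "rho t m \<ge> 0" for m using rho_nonneg inI tI by blast
  define T1 where "T1 m = rho t m * (\<bar>u $ m / 2 + vv m\<bar> + \<bar>- u $ m / 2 + vv m\<bar> - \<bar>u $ m\<bar>)" for m
  define T2 where "T2 m = rho t m * (\<bar>u $ m\<bar> - \<bar>u $ m / 2 + vv m\<bar> + \<bar>- u $ m / 2 + vv m\<bar>)" for m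
  define T3 where "T3 m = rho t m * (\<bar>u $ m\<bar> + \<bar>u $ m / 2 + vv m\<bar> - \<bar>- u $ m / 2 + vv m\<bar>)" for m
  have T1n: "T1 m \<ge> 0" for m unfolding T1_def using rnn term1[of "u $ m" "vv m"] by simp
  have T2n: "T2 m \<ge> 0" for m unfolding T2_def using rnn term2[of "u $ m" "vv m"] by simp
  have T3n: "T3 m \<ge> 0" for m unfolding T3_def using rnn term3[of "u $ m" "vv m"] by simp
  have fgN1: "f + g - N = (\<Sum>m\<in>UNIV. T1 m)"
    by (simp add: f_def g_def N_def T1_def sum_subtractf[symmetric] sum.distrib[symmetric] algebra_simps)
  have fgN2: "N - f + g = (\<Sum>m\<in>UNIV. T2 m)"
    by (simp add: f_def g_def N_def T2_def sum_subtractf[symmetric] sum.distrib[symmetric] algebra_simps)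
  have fgN3: "N + f - g = (\<Sum>m\<in>UNIV. T3 m)"
    by (simp add: f_def g_def N_def T3_def sum_subtractf[symmetric] sum.distrib[symmetric] algebra_simps)
  have rl: "rho t i \<ge> r0" "rho t j \<ge> r0" using rlow tI by auto
  have mi: "min \<bar>u $ i\<bar> \<bar>u $ j\<bar> \<le> \<bar>u $ i\<bar>" "min \<bar>u $ i\<bar> \<bar>u $ j\<bar> \<le> \<bar>u $ j\<bar>" by auto
  have T1i: "T1 i = rho t i * \<bar>u $ i\<bar>" and T1j: "T1 j = rho t j * \<bar>u $ j\<bar>"
    using ij by (auto simp: T1_def vv_def abs_if)
  have T2j: "T2 j = 2 * rho t j * \<bar>u $ j\<bar>"
    using ij by (auto simp: T2_def vv_def abs_if)
  have T3i: "T3 i = 2 * rho t i * \<bar>u $ i\<bar>"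
    using ij by (auto simp: T3_def vv_def abs_if)
  have "rho t i * \<bar>u $ i\<bar> \<ge> r0 * min \<bar>u $ i\<bar> \<bar>u $ j\<bar>"
    by (rule mult_mono) (use rl mi r0 in auto)
  moreover have "rho t j * \<bar>u $ j\<bar> \<ge> r0 * min \<bar>u $ i\<bar> \<bar>u $ j\<bar>"
    by (rule mult_mono) (use rl mi r0 in auto)
  ultimately have rg: "rho t i * \<bar>u $ i\<bar> \<ge> \<gamma> / 2" "rho t j * \<bar>u $ j\<bar> \<ge> \<gamma> / 2"
    by (auto simp: \<gamma>_def)
  have "(\<Sum>m\<in>{i,j}. T1 m) \<le> (\<Sum>m\<in>UNIV. T1 m)" by (rule sum_mono2) (auto simp: T1n)
  then have g1: "f + g - N \<ge> \<gamma>" using fgN1 T1i T1j ij rg by simp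
  have "T2 j \<le> (\<Sum>m\<in>UNIV. T2 m)" by (rule member_le_sum) (auto simp: T2n)
  then have g2: "N - f + g \<ge> \<gamma>" using fgN2 T2j rg by simp
  have "T3 i \<le> (\<Sum>m\<in>UNIV. T3 m)" by (rule member_le_sum) (auto simp: T3n)
  then have g3: "N + f - g \<ge> \<gamma>" using fgN3 T3i rg by simp
  define X1 where "X1 = \<bar>wd (zz t + d) - wd (zz t)\<bar>"
  define X2 where "X2 = \<bar>wd (zz t + d) - wd (zz t')\<bar>"
  define X3 where "X3 = \<bar>wd (zz t') - wd (zz t)\<bar>"
  have three: "X1 = X2 + X3 \<or> X2 = X1 + X3 \<or> X3 = X1 + X2"
    unfolding X1_def X2_def X3_def by (rule three_abs) simp
  have eps: "2 * \<epsilon>0 * (h * (2 * U1)) = h * \<gamma> / 10" using U1 by (simp add: \<epsilon>0_def field_simps)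
  have e1: "\<bar>X1 - h * f\<bar> \<le> h * \<gamma> / 10"
  proof -
    have "2 * \<epsilon>0 * norm d \<le> 2 * \<epsilon>0 * (h * (2 * U1))" by (rule mult_left_mono) (use nd \<epsilon>0 in auto)
    then show ?thesis using A eps by (simp add: X1_def Nd)
  qed
  have e2: "\<bar>X2 - h * g'\<bar> \<le> h * \<gamma> / 10"
  proof -
    have "2 * \<epsilon>0 * norm d' \<le> 2 * \<epsilon>0 * (h * (2 * U1))" by (rule mult_left_mono) (use nd' \<epsilon>0 in auto)
    then show ?thesis using B eps zeq by (simp add: X2_def Nd')
  qed
  have e3: "\<bar>X3 - h * N\<bar> \<le> h * \<gamma> / 10"
  proof -
    have "2 * \<epsilon>0 * norm (h *\<^sub>R u) \<le> 2 * \<epsilon>0 * (h * (2 * U1))" by (rule mult_left_mono) (use ndu \<epsilon>0 in auto)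
    then show ?thesis using C eps zeq by (simp add: X3_def Nu)
  qed
  have e4: "\<bar>h * g' - h * g\<bar> \<le> h * \<gamma> / 4"
  proof -
    have "\<bar>h * g' - h * g\<bar> = h * \<bar>g' - g\<bar>" using h by (simp add: abs_mult right_diff_distrib[symmetric])
    also have "\<dots> \<le> h * (K * h * (2 * U1))" using gg h by (simp add: mult_left_mono)
    also have "K * h * (2 * U1) \<le> \<gamma> / 4"
    proof -
      have "h * (8 * K * U1) < \<gamma>" using h(2) K U1 by (simp add: field_simps)
      then show ?thesis by (simp add: algebra_simps)
    qed
    then have "h * (K * h * (2 * U1)) \<le> h * (\<gamma> / 4)" using h by (simp add: mult_left_mono)
    finally show ?thesis by simp
  qed
  have hg1: "h * (f + g - N) \<ge> h * \<gamma>" using g1 h by (simp add: mult_left_mono)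
  have hg2: "h * (N - f + g) \<ge> h * \<gamma>" using g2 h by (simp add: mult_left_mono)
  have hg3: "h * (N + f - g) \<ge> h * \<gamma>" using g3 h by (simp add: mult_left_mono)
  have hpos: "h * \<gamma> > 0" using h \<gamma> by simp
  have h1: "h * f + h * g - h * N \<ge> h * \<gamma>" using hg1 by (simp add: algebra_simps)
  have h2: "h * N - h * f + h * g \<ge> h * \<gamma>" using hg2 by (simp add: algebra_simps)
  have h3: "h * N + h * f - h * g \<ge> h * \<gamma>" using hg3 by (simp add: algebra_simps)
  show False
    by (rule lin_contra[OF three e1 e2 e3 _ h1 h2 h3 hpos]) (use e4 in \<open>simp add: abs_minus_commute\<close>)
qed

end


lemma W_lip:
  assumes w: "w \<ge> 0" "w' \<ge> 0" "w + w' = 1"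
  shows "norm (Wmap w w' U - Wmap w w' V) \<le> inorm_vec (gHminus_vec U V)"
proof -
  have "norm (Wmap w w' U - Wmap w w' V) \<le> (\<Sum>i\<in>UNIV. \<bar>(Wmap w w' U - Wmap w w' V) $ i\<bar>)"
    by (rule norm_le_l1_cart)
  also have "\<dots> \<le> (\<Sum>i\<in>UNIV. inorm ((gHminus_vec U V) $ i))"
  proof (rule sum_mono)
    fix i
    have e: "(Wmap w w' U - Wmap w w' V) $ i = w * (fst (U$i) - fst (V$i)) + w' * (snd (U$i) - snd (V$i))"
      by (simp add: Wmap_def algebra_simps)
    have b: "\<bar>fst (U$i) - fst (V$i)\<bar> \<le> inorm (gHminus (U$i) (V$i))" "\<bar>snd (U$i) - snd (V$i)\<bar> \<le> inorm (gHminus (U$i) (V$i))"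
      using inorm_ge by auto
    have "\<bar>w * (fst (U$i) - fst (V$i)) + w' * (snd (U$i) - snd (V$i))\<bar>
        \<le> w * \<bar>fst (U$i) - fst (V$i)\<bar> + w' * \<bar>snd (U$i) - snd (V$i)\<bar>"
      using w by (metis abs_mult abs_of_nonneg abs_triangle_ineq)
    also have "\<dots> \<le> w * inorm (gHminus (U$i) (V$i)) + w' * inorm (gHminus (U$i) (V$i))"
      using b w by (intro add_mono mult_left_mono) auto
    also have "\<dots> = inorm (gHminus (U$i) (V$i))" using w(3) by (metis distrib_right mult_1)
    finally show "\<bar>(Wmap w w' U - Wmap w w' V) $ i\<bar> \<le> inorm ((gHminus_vec U V) $ i)"
      unfolding e gHminus_vec_def by simp
  qed
  also have "\<dots> = inorm_vec (gHminus_vec U V)" by (simp add: inorm_vec_def)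
  finally show ?thesis .
qed

lemma sel_aux:
  fixes g h1 h2 :: "real \<Rightarrow> real"
  assumes tb: "\<tau> < b0" and at: "a0 \<le> \<tau>"
    and sel: "\<forall>t\<in>{a0..b0}. g t = h1 t \<or> g t = h2 t"
    and g1: "g \<tau> = h1 \<tau>"
    and m1: "\<forall>s t. a0 \<le> s \<longrightarrow> s \<le> t \<longrightarrow> t \<le> b0 \<longrightarrow> h1 s \<le> h1 t"
    and m2: "\<forall>s t. a0 \<le> s \<longrightarrow> s \<le> t \<longrightarrow> t \<le> b0 \<longrightarrow> h2 s \<le> h2 t"
    and C: "C > 0"
    and lg: "\<forall>s\<in>{a0..b0}. \<forall>t\<in>{a0..b0}. \<bar>g s - g t\<bar> \<le> C * \<bar>s - t\<bar>"
    and l2: "\<forall>s\<in>{a0..b0}. \<forall>t\<in>{a0..b0}. \<bar>h2 s - h2 t\<bar> \<le> C * \<bar>s - t\<bar>"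
  shows "\<exists>t. \<tau> < t \<and> t \<le> b0 \<and> g \<tau> \<le> g t"
proof (cases "h2 \<tau> \<ge> g \<tau>")
  case True
  have "g b0 = h1 b0 \<or> g b0 = h2 b0" using sel tb at by auto
  moreover have "h1 \<tau> \<le> h1 b0" "h2 \<tau> \<le> h2 b0" using m1 m2 tb at by auto
  ultimately have "g \<tau> \<le> g b0" using True g1 by auto
  then show ?thesis using tb by auto
next
  case False
  define e where "e = g \<tau> - h2 \<tau>"
  have e: "e > 0" using False by (simp add: e_def)
  define t where "t = min b0 (\<tau> + e / (4 * C))"
  have t: "\<tau> < t" "t \<le> b0" using tb e C by (auto simp: t_def)
  have td: "C * (t - \<tau>) \<le> e / 4"
  proof -
    have "t - \<tau> \<le> e / (4 * C)" by (simp add: t_def)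
    then have "C * (t - \<tau>) \<le> C * (e / (4 * C))" by (rule mult_left_mono) (use C in auto)
    also have "\<dots> = e / 4" using C by simp
    finally show ?thesis .
  qed
  have inI: "\<tau> \<in> {a0..b0}" "t \<in> {a0..b0}" using t tb at by auto
  have "\<bar>g t - g \<tau>\<bar> \<le> C * \<bar>t - \<tau>\<bar>" "\<bar>h2 t - h2 \<tau>\<bar> \<le> C * \<bar>t - \<tau>\<bar>"
    using lg l2 inI by blast+
  then have b4: "\<bar>g t - g \<tau>\<bar> \<le> e / 4" "\<bar>h2 t - h2 \<tau>\<bar> \<le> e / 4" using td t by auto
  have "g t \<noteq> h2 t"
  proof
    assume "g t = h2 t"
    moreover have "g \<tau> - g t \<le> e / 4" "h2 t - h2 \<tau> \<le> e / 4" using abs_le_D2[OF b4(1)] abs_le_D1[OF b4(2)] by linarith+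
    ultimately show False using e e_def by linarith
  qed
  then have "g t = h1 t" using sel inI by auto
  moreover have "h1 \<tau> \<le> h1 t" using m1 t at by auto
  ultimately show ?thesis using t g1 by auto
qed

lemma select_mono:
  fixes g h1 h2 :: "real \<Rightarrow> real"
  assumes ab0: "a0 \<le> b0"
    and sel: "\<forall>t\<in>{a0..b0}. g t = h1 t \<or> g t = h2 t"
    and m1: "\<forall>s t. a0 \<le> s \<longrightarrow> s \<le> t \<longrightarrow> t \<le> b0 \<longrightarrow> h1 s \<le> h1 t"
    and m2: "\<forall>s t. a0 \<le> s \<longrightarrow> s \<le> t \<longrightarrow> t \<le> b0 \<longrightarrow> h2 s \<le> h2 t"
    and C: "C > 0"
    and lg: "\<forall>s\<in>{a0..b0}. \<forall>t\<in>{a0..b0}. \<bar>g s - g t\<bar> \<le> C * \<bar>s - t\<bar>"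
    and l1: "\<forall>s\<in>{a0..b0}. \<forall>t\<in>{a0..b0}. \<bar>h1 s - h1 t\<bar> \<le> C * \<bar>s - t\<bar>"
    and l2: "\<forall>s\<in>{a0..b0}. \<forall>t\<in>{a0..b0}. \<bar>h2 s - h2 t\<bar> \<le> C * \<bar>s - t\<bar>"
  shows "g a0 \<le> g b0"
proof (rule ccontr)
  assume neg: "\<not> g a0 \<le> g b0"
  define S where "S = {t \<in> {a0..b0}. g a0 \<le> g t}"
  have aS: "a0 \<in> S" using ab0 by (simp add: S_def)
  have bdd: "bdd_above S" by (rule bdd_aboveI[of _ b0]) (auto simp: S_def)
  have ne: "S \<noteq> {}" using aS by auto
  define \<tau> where "\<tau> = Sup S"
  have at: "a0 \<le> \<tau>" using cSup_upper[OF aS bdd] by (simp add: \<tau>_def)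
  have tb: "\<tau> \<le> b0" unfolding \<tau>_def by (rule cSup_least[OF ne]) (auto simp: S_def)
  have gt: "g a0 \<le> g \<tau>"
  proof (rule field_le_epsilon)
    fix e :: real assume e: "e > 0"
    have "\<tau> - e / C < \<tau>" using e C by simp
    then obtain s where s: "s \<in> S" "\<tau> - e / C < s" using less_cSup_iff[OF ne bdd] by (auto simp: \<tau>_def)
    have sle: "s \<le> \<tau>" using cSup_upper[OF s(1) bdd] by (simp add: \<tau>_def)
    have sI: "s \<in> {a0..b0}" and gs: "g a0 \<le> g s" using s by (auto simp: S_def)
    have "\<bar>g \<tau> - g s\<bar> \<le> C * \<bar>\<tau> - s\<bar>" using lg sI at tb by auto
    also have "C * \<bar>\<tau> - s\<bar> \<le> C * (e / C)" using s sle C by (intro mult_left_mono) auto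
    also have "\<dots> = e" using C by simp
    finally show "g a0 \<le> g \<tau> + e" using gs by (auto simp: abs_le_iff)
  qed
  have tb': "\<tau> < b0"
  proof (rule ccontr)
    assume "\<not> \<tau> < b0"
    then have "\<tau> = b0" using tb by auto
    then show False using gt neg by auto
  qed
  have "\<exists>t. \<tau> < t \<and> t \<le> b0 \<and> g \<tau> \<le> g t"
  proof -
    have "g \<tau> = h1 \<tau> \<or> g \<tau> = h2 \<tau>" using sel at tb by auto
    then show ?thesis
    proof
      assume "g \<tau> = h1 \<tau>"
      then show ?thesis using sel_aux[OF tb' at sel _ m1 m2 C lg l2] by blast
    next
      assume "g \<tau> = h2 \<tau>"
      moreover have "\<forall>t\<in>{a0..b0}. g t = h2 t \<or> g t = h1 t" using sel by auto
      ultimately show ?thesis using sel_aux[OF tb' at _ _ m2 m1 C lg l1] by blast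
    qed
  qed
  then obtain t where t: "\<tau> < t" "t \<le> b0" "g \<tau> \<le> g t" by auto
  then have "t \<in> S" using gt at by (auto simp: S_def)
  then have "t \<le> \<tau>" using cSup_upper[OF _ bdd] by (simp add: \<tau>_def)
  then show False using t by simp
qed

lemma term_sel:
  fixes a b u w w' :: real
  assumes ab: "a \<le> b" and w: "w + w' = 1"
  shows "(0 \<le> u \<or> a = b) \<Longrightarrow> (w * a + w' * b) * u = w * min (u * a) (u * b) + w' * max (u * a) (u * b)"
    and "(u \<le> 0 \<or> a = b) \<Longrightarrow> (w * a + w' * b) * u = w * max (u * a) (u * b) + w' * min (u * a) (u * b)"
proof -
  assume "0 \<le> u \<or> a = b"
  then show "(w * a + w' * b) * u = w * min (u * a) (u * b) + w' * max (u * a) (u * b)"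
  proof
    assume u: "0 \<le> u"
    then have "u * a \<le> u * b" using ab by (simp add: mult_left_mono)
    then show ?thesis by (simp add: min_def max_def algebra_simps)
  next
    assume "a = b"
    then show ?thesis using w by (simp add: algebra_simps)
  qed
next
  assume "u \<le> 0 \<or> a = b"
  then show "(w * a + w' * b) * u = w * max (u * a) (u * b) + w' * min (u * a) (u * b)"
  proof
    assume u: "u \<le> 0"
    then have "u * b \<le> u * a" using ab by (simp add: mult_left_mono_neg)
    then show ?thesis by (simp add: min_def max_def algebra_simps)
  next
    assume "a = b"
    then show ?thesis using w by (simp add: algebra_simps)
  qed
qed

lemma min_lip: "\<bar>min (p::real) q - min p' q'\<bar> \<le> \<bar>p - p'\<bar> + \<bar>q - q'\<bar>"
  and max_lip: "\<bar>max (p::real) q - max p' q'\<bar> \<le> \<bar>p - p'\<bar> + \<bar>q - q'\<bar>"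
  by (auto simp: min_def max_def abs_if)



lemma comb_mono:
  fixes w w' A1 A2 B1 B2 k :: real
  assumes "w \<ge> 0" "w' \<ge> 0" "w + w' = 1" "A1 + k \<le> A2" "B1 + k \<le> B2"
  shows "w * A1 + w' * B1 + k \<le> w * A2 + w' * B2"
proof -
  have 1: "w * (A1 + k) \<le> w * A2" using assms by (intro mult_left_mono) auto
  have 2: "w' * (B1 + k) \<le> w' * B2" using assms by (intro mult_left_mono) auto
  have 3: "w * (A1 + k) + w' * (B1 + k) = w * A1 + w' * B1 + (w + w') * k" by (simp add: algebra_simps)
  show ?thesis using 1 2 3 assms(3) by simp
qed

lemma lip_comb:
  fixes w w' X1 X2 Y1 Y2 k1 k2 D :: real
  assumes "w \<ge> 0" "w' \<ge> 0" "w + w' = 1" "\<bar>X1 - X2\<bar> \<le> D" "\<bar>Y1 - Y2\<bar> \<le> D"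
  shows "\<bar>(w * X1 + w' * Y1 - k1) - (w * X2 + w' * Y2 - k2)\<bar> \<le> D + \<bar>k1 - k2\<bar>"
proof -
  have e: "(w * X1 + w' * Y1 - k1) - (w * X2 + w' * Y2 - k2) = w * (X1 - X2) + w' * (Y1 - Y2) - (k1 - k2)"
    by (simp add: algebra_simps)
  have "\<bar>w * (X1 - X2) + w' * (Y1 - Y2) - (k1 - k2)\<bar> \<le> \<bar>w * (X1 - X2)\<bar> + \<bar>w' * (Y1 - Y2)\<bar> + \<bar>k1 - k2\<bar>"
    by linarith
  also have "\<bar>w * (X1 - X2)\<bar> \<le> w * D" using assms by (simp add: abs_mult mult_left_mono)
  also have "\<bar>w' * (Y1 - Y2)\<bar> \<le> w' * D" using assms by (simp add: abs_mult mult_left_mono)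
  also have "w * D + w' * D + \<bar>k1 - k2\<bar> = D + \<bar>k1 - k2\<bar>" using assms(3) by (metis distrib_right mult_1)
  finally show ?thesis unfolding e by simp
qed

context seg begin

definition "sW w w' t = Wmap w w' (gH_gradient F (zz t)) \<bullet> u"

lemma sW_eq: "sW w w' t = (\<Sum>k\<in>UNIV. (w * a t k + w' * b t k) * u $ k)"
  by (simp add: sW_def Wmap_def gH_gradient_def inner_vec_def a_def b_def)

lemma P_eq: "P t = (\<Sum>k\<in>UNIV. min (u $ k * a t k) (u $ k * b t k))"
  by (simp add: P_def PPz_def a_def b_def)

lemma Q_eq: "Q t = (\<Sum>k\<in>UNIV. max (u $ k * a t k) (u $ k * b t k))"
  by (simp add: Q_def QQz_def a_def b_def)

lemma sW_sel:
  assumes t: "t \<in> {0..1}" and w: "w + w' = 1"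
  shows "sW w w' t = w * P t + w' * Q t \<or> sW w w' t = w * Q t + w' * P t"
proof -
  have "(\<forall>k. 0 \<le> u $ k \<or> a t k = b t k) \<or> (\<forall>k. u $ k \<le> 0 \<or> a t k = b t k)"
  proof (rule ccontr)
    assume "\<not> ?thesis"
    then obtain k1 k2 where k1: "\<not> (0 \<le> u $ k1 \<or> a t k1 = b t k1)" and k2: "\<not> (u $ k2 \<le> 0 \<or> a t k2 = b t k2)"
      by blast
    then have "k1 \<noteq> k2" "u $ k1 \<noteq> 0" "u $ k2 \<noteq> 0" by auto
    then show False using single_spread[OF t, of k1 k2] k1 k2 by auto
  qed
  then show ?thesis
  proof
    assume H: "\<forall>k. 0 \<le> u $ k \<or> a t k = b t k"
    have "sW w w' t = (\<Sum>k\<in>UNIV. w * min (u $ k * a t k) (u $ k * b t k) + w' * max (u $ k * a t k) (u $ k * b t k))"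
      unfolding sW_eq
    proof (rule sum.cong)
      fix k
      show "(w * a t k + w' * b t k) * u $ k = w * min (u $ k * a t k) (u $ k * b t k) + w' * max (u $ k * a t k) (u $ k * b t k)"
        using H term_sel(1)[OF ab[OF t, of k] w, of "u $ k"] by blast
    qed simp
    also have "\<dots> = w * P t + w' * Q t" by (simp add: P_eq Q_eq sum.distrib sum_distrib_left)
    finally show ?thesis by blast
  next
    assume H: "\<forall>k. u $ k \<le> 0 \<or> a t k = b t k"
    have "sW w w' t = (\<Sum>k\<in>UNIV. w * max (u $ k * a t k) (u $ k * b t k) + w' * min (u $ k * a t k) (u $ k * b t k))"
      unfolding sW_eq
    proof (rule sum.cong)
      fix k
      show "(w * a t k + w' * b t k) * u $ k = w * max (u $ k * a t k) (u $ k * b t k) + w' * min (u $ k * a t k) (u $ k * b t k)"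
        using H term_sel(2)[OF ab[OF t, of k] w, of "u $ k"] by blast
    qed simp
    also have "\<dots> = w * Q t + w' * P t" by (simp add: P_eq Q_eq sum.distrib sum_distrib_left)
    finally show ?thesis by blast
  qed
qed

definition "U1 = (\<Sum>k\<in>UNIV. \<bar>u $ k\<bar>)"

lemma U1_nonneg: "U1 \<ge> 0" by (simp add: U1_def sum_nonneg)

lemma sW_lip:
  assumes t: "t \<in> {0..1}" "t' \<in> {0..1}" and w: "w \<ge> 0" "w' \<ge> 0" "w + w' = 1"
  shows "\<bar>sW w w' t - sW w w' t'\<bar> \<le> (2 * M * norm u * U1) * \<bar>t - t'\<bar>"
proof -
  define D where "D = M * norm u * \<bar>t - t'\<bar>"
  have D0: "D \<ge> 0" using Mpos by (simp add: D_def)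
  have "\<bar>sW w w' t - sW w w' t'\<bar> = \<bar>\<Sum>k\<in>UNIV. ((w * a t k + w' * b t k) - (w * a t' k + w' * b t' k)) * u $ k\<bar>"
    unfolding sW_eq sum_subtractf[symmetric] by (simp add: algebra_simps)
  also have "\<dots> \<le> (\<Sum>k\<in>UNIV. \<bar>((w * a t k + w' * b t k) - (w * a t' k + w' * b t' k)) * u $ k\<bar>)" by (rule sum_abs)
  also have "\<dots> \<le> (\<Sum>k\<in>UNIV. D * \<bar>u $ k\<bar>)"
  proof (rule sum_mono)
    fix k
    have "\<bar>(w * a t k + w' * b t k - 0) - (w * a t' k + w' * b t' k - 0)\<bar> \<le> D + \<bar>0 - 0\<bar>"
      by (rule lip_comb[OF w]) (use ab_lip[OF t, of k] in \<open>simp_all add: D_def\<close>)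
    then show "\<bar>((w * a t k + w' * b t k) - (w * a t' k + w' * b t' k)) * u $ k\<bar> \<le> D * \<bar>u $ k\<bar>"
      by (simp add: abs_mult mult_right_mono)
  qed
  also have "\<dots> = D * U1" by (simp add: U1_def sum_distrib_left)
  also have "\<dots> \<le> (2 * M * norm u * U1) * \<bar>t - t'\<bar>"
    using U1_nonneg Mpos by (simp add: D_def mult_right_mono)
  finally show ?thesis .
qed

lemma PQ_lip:
  assumes t: "t \<in> {0..1}" "t' \<in> {0..1}"
  shows "\<bar>P t - P t'\<bar> \<le> (2 * M * norm u * U1) * \<bar>t - t'\<bar> \<and> \<bar>Q t - Q t'\<bar> \<le> (2 * M * norm u * U1) * \<bar>t - t'\<bar>"
proof -
  define D where "D = M * norm u * \<bar>t - t'\<bar>"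
  have tm: "\<bar>u $ k * a t k - u $ k * a t' k\<bar> + \<bar>u $ k * b t k - u $ k * b t' k\<bar> \<le> (2 * D) * \<bar>u $ k\<bar>" for k
  proof -
    have "\<bar>u $ k * a t k - u $ k * a t' k\<bar> = \<bar>u $ k\<bar> * \<bar>a t k - a t' k\<bar>"
      by (simp add: abs_mult right_diff_distrib[symmetric])
    moreover have "\<bar>u $ k * b t k - u $ k * b t' k\<bar> = \<bar>u $ k\<bar> * \<bar>b t k - b t' k\<bar>"
      by (simp add: abs_mult right_diff_distrib[symmetric])
    moreover have "\<bar>u $ k\<bar> * \<bar>a t k - a t' k\<bar> \<le> \<bar>u $ k\<bar> * D" "\<bar>u $ k\<bar> * \<bar>b t k - b t' k\<bar> \<le> \<bar>u $ k\<bar> * D"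
      using ab_lip[OF t, of k] by (auto simp: D_def intro: mult_left_mono)
    ultimately show ?thesis by (simp add: algebra_simps)
  qed
  have "\<bar>P t - P t'\<bar> \<le> (\<Sum>k\<in>UNIV. \<bar>min (u $ k * a t k) (u $ k * b t k) - min (u $ k * a t' k) (u $ k * b t' k)\<bar>)"
    unfolding P_eq sum_subtractf[symmetric] by (rule sum_abs)
  also have "\<dots> \<le> (\<Sum>k\<in>UNIV. (2 * D) * \<bar>u $ k\<bar>)"
    by (rule sum_mono) (rule order_trans[OF min_lip tm])
  also have "\<dots> = (2 * M * norm u * U1) * \<bar>t - t'\<bar>" by (simp add: U1_def sum_distrib_left D_def algebra_simps)
  finally have 1: "\<bar>P t - P t'\<bar> \<le> (2 * M * norm u * U1) * \<bar>t - t'\<bar>" .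
  have "\<bar>Q t - Q t'\<bar> \<le> (\<Sum>k\<in>UNIV. \<bar>max (u $ k * a t k) (u $ k * b t k) - max (u $ k * a t' k) (u $ k * b t' k)\<bar>)"
    unfolding Q_eq sum_subtractf[symmetric] by (rule sum_abs)
  also have "\<dots> \<le> (\<Sum>k\<in>UNIV. (2 * D) * \<bar>u $ k\<bar>)"
    by (rule sum_mono) (rule order_trans[OF max_lip tm])
  also have "\<dots> = (2 * M * norm u * U1) * \<bar>t - t'\<bar>" by (simp add: U1_def sum_distrib_left D_def algebra_simps)
  finally have 2: "\<bar>Q t - Q t'\<bar> \<le> (2 * M * norm u * U1) * \<bar>t - t'\<bar>" .
  show ?thesis using 1 2 by simp
qed

lemma main_mono:
  assumes w: "w \<ge> 0" "w' \<ge> 0" "w + w' = 1"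
  shows "sW w w' 1 - sW w w' 0 \<ge> c"
proof -
  define CP where "CP = 2 * M * norm u * U1"
  have CP: "CP \<ge> 0" using Mpos U1_nonneg by (simp add: CP_def)
  define C where "C = CP + c + 1"
  have C: "C > 0" using CP c_nonneg by (simp add: C_def)
  define g where "g t = sW w w' t - c * t" for t
  define h1 where "h1 t = w * P t + w' * Q t - c * t" for t
  define h2 where "h2 t = w * Q t + w' * P t - c * t" for t
  have sel: "\<forall>t\<in>{0..1}. g t = h1 t \<or> g t = h2 t"
    using sW_sel[OF _ w(3)] by (auto simp: g_def h1_def h2_def)
  have cdiff: "\<bar>c * s - c * t\<bar> = c * \<bar>s - t\<bar>" for s t
    using c_nonneg by (simp add: abs_mult right_diff_distrib[symmetric])
  have m1: "\<forall>s t. 0 \<le> s \<longrightarrow> s \<le> t \<longrightarrow> t \<le> 1 \<longrightarrow> h1 s \<le> h1 t"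
  proof (intro allI impI)
    fix s t :: real assume st: "0 \<le> s" "s \<le> t" "t \<le> 1"
    show "h1 s \<le> h1 t"
    proof (cases "s = t")
      case True then show ?thesis by simp
    next
      case False
      then have "s < t" using st by simp
      then have "P s + c * (t - s) \<le> P t" "Q s + c * (t - s) \<le> Q t" using PQ_mono st by auto
      then have "w * P s + w' * Q s + c * (t - s) \<le> w * P t + w' * Q t" by (rule comb_mono[OF w])
      then show ?thesis by (simp add: h1_def algebra_simps)
    qed
  qed
  have m2: "\<forall>s t. 0 \<le> s \<longrightarrow> s \<le> t \<longrightarrow> t \<le> 1 \<longrightarrow> h2 s \<le> h2 t"
  proof (intro allI impI)
    fix s t :: real assume st: "0 \<le> s" "s \<le> t" "t \<le> 1"
    show "h2 s \<le> h2 t"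
    proof (cases "s = t")
      case True then show ?thesis by simp
    next
      case False
      then have "s < t" using st by simp
      then have "P s + c * (t - s) \<le> P t" "Q s + c * (t - s) \<le> Q t" using PQ_mono st by auto
      then have "w * Q s + w' * P s + c * (t - s) \<le> w * Q t + w' * P t" by (intro comb_mono[OF w])
      then show ?thesis by (simp add: h2_def algebra_simps)
    qed
  qed
  have lg: "\<forall>s\<in>{0..1}. \<forall>t\<in>{0..1}. \<bar>g s - g t\<bar> \<le> C * \<bar>s - t\<bar>"
  proof (intro ballI)
    fix s t :: real assume st: "s \<in> {0..1}" "t \<in> {0..1}"
    have "\<bar>g s - g t\<bar> \<le> \<bar>sW w w' s - sW w w' t\<bar> + \<bar>c * s - c * t\<bar>" by (simp add: g_def; linarith)
    also have "\<dots> \<le> CP * \<bar>s - t\<bar> + c * \<bar>s - t\<bar>" using sW_lip[OF st w] cdiff by (simp add: CP_def)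
    also have "\<dots> \<le> C * \<bar>s - t\<bar>" by (simp add: C_def algebra_simps)
    finally show "\<bar>g s - g t\<bar> \<le> C * \<bar>s - t\<bar>" .
  qed
  have l1: "\<forall>s\<in>{0..1}. \<forall>t\<in>{0..1}. \<bar>h1 s - h1 t\<bar> \<le> C * \<bar>s - t\<bar>"
  proof (intro ballI)
    fix s t :: real assume st: "s \<in> {0..1}" "t \<in> {0..1}"
    have "\<bar>h1 s - h1 t\<bar> \<le> CP * \<bar>s - t\<bar> + \<bar>c * s - c * t\<bar>"
      unfolding h1_def by (rule lip_comb[OF w]) (use PQ_lip[OF st] in \<open>simp_all add: CP_def\<close>)
    also have "\<dots> \<le> C * \<bar>s - t\<bar>" using cdiff by (simp add: C_def algebra_simps)
    finally show "\<bar>h1 s - h1 t\<bar> \<le> C * \<bar>s - t\<bar>" .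
  qed
  have l2: "\<forall>s\<in>{0..1}. \<forall>t\<in>{0..1}. \<bar>h2 s - h2 t\<bar> \<le> C * \<bar>s - t\<bar>"
  proof (intro ballI)
    fix s t :: real assume st: "s \<in> {0..1}" "t \<in> {0..1}"
    have "\<bar>h2 s - h2 t\<bar> \<le> CP * \<bar>s - t\<bar> + \<bar>c * s - c * t\<bar>"
      unfolding h2_def by (rule lip_comb[OF w]) (use PQ_lip[OF st] in \<open>simp_all add: CP_def\<close>)
    also have "\<dots> \<le> C * \<bar>s - t\<bar>" using cdiff by (simp add: C_def algebra_simps)
    finally show "\<bar>h2 s - h2 t\<bar> \<le> C * \<bar>s - t\<bar>" .
  qed
  have "g 0 \<le> g 1" by (rule select_mono[OF _ sel m1 m2 C lg l1 l2]) simp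
  then show ?thesis by (simp add: g_def)
qed

end



theorem lemma5p6:
  fixes F :: "real ^ 'n \<Rightarrow> interval" and X :: "(real ^ 'n) set" and w w' :: real
  assumes "w \<in> {0..1}" and "w' \<in> {0..1}" and "w + w' = 1"
    and "X \<noteq> {}" and "convex X"
    and "is_ivf F"
    and "strongly_convex_ivf_on X F"
    and "\<forall>x\<in>X. gH_differentiable_at F x"
    and "gH_lipschitz_gradient_on X F"
  shows "\<exists>\<sigma> > 0. \<exists>L > 0. \<forall>x\<in>X. \<forall>y\<in>X.
     (Wmap w w' (gH_gradient F x) - Wmap w w' (gH_gradient F y)) \<bullet> (x - y)
       \<ge> \<sigma> / L\<^sup>2 * (norm (Wmap w w' (gH_gradient F x) - Wmap w w' (gH_gradient F y)))\<^sup>2"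
proof -
  obtain G \<sigma> where Gc: "convex_ivf_on X G" and sig: "\<sigma> > 0"
    and Frep: "\<forall>z\<in>X. F z = iplus (G z) (iscale (1/2 * (norm z)\<^sup>2) (\<sigma>, \<sigma>))"
    using assms(7) unfolding strongly_convex_ivf_on_def by blast
  obtain M where Mpos: "M > 0" and lip: "\<forall>p\<in>X. \<forall>q\<in>X.
        inorm_vec (gHminus_vec (gH_gradient F p) (gH_gradient F q)) \<le> M * norm (p - q)"
    using assms(9) unfolding gH_lipschitz_gradient_on_def by blast
  have w: "w \<ge> 0" "w' \<ge> 0" "w + w' = 1" using assms(1-3) by auto
  have key: "(Wmap w w' (gH_gradient F x) - Wmap w w' (gH_gradient F y)) \<bullet> (x - y)
       \<ge> \<sigma> / M\<^sup>2 * (norm (Wmap w w' (gH_gradient F x) - Wmap w w' (gH_gradient F y)))\<^sup>2"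
    if xX: "x \<in> X" and yX: "y \<in> X" for x y
  proof -
    define Wx where "Wx = Wmap w w' (gH_gradient F x)"
    define Wy where "Wy = Wmap w w' (gH_gradient F y)"
    have nW: "norm (Wx - Wy) \<le> M * norm (x - y)"
      using W_lip[OF w, of "gH_gradient F x" "gH_gradient F y"] lip xX yX
      unfolding Wx_def Wy_def by (meson order_trans)
    show ?thesis
    proof (cases "x = y")
      case True
      then show ?thesis by simp
    next
      case False
      interpret seg F X x y G \<sigma> M
        by unfold_locales (use xX yX assms(5) Gc sig Frep assms(8) Mpos lip False in auto)
      have mm: "sW w w' 1 - sW w w' 0 \<ge> c" by (rule main_mono[OF w])
      have z1: "zz 1 = y" and z0: "zz 0 = x" by (simp_all add: zz_def u_def)
      have "sW w w' 1 - sW w w' 0 = (Wx - Wy) \<bullet> (x - y)"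
        unfolding sW_def z1 z0 Wx_def Wy_def u_def by (simp add: inner_diff_left inner_diff_right algebra_simps)
      then have lhs: "(Wx - Wy) \<bullet> (x - y) \<ge> \<sigma> * (norm (x - y))\<^sup>2"
        using mm by (simp add: c_def u_def norm_minus_commute)
      have "(norm (Wx - Wy))\<^sup>2 \<le> (M * norm (x - y))\<^sup>2"
        using nW by (intro power_mono) auto
      then have "\<sigma> / M\<^sup>2 * (norm (Wx - Wy))\<^sup>2 \<le> \<sigma> / M\<^sup>2 * (M * norm (x - y))\<^sup>2"
        using sig by (intro mult_left_mono) auto
      also have "\<dots> = \<sigma> * (norm (x - y))\<^sup>2" using Mpos by (simp add: power_mult_distrib)
      finally show ?thesis using lhs unfolding Wx_def Wy_def by linarith
    qed
  qed
  show ?thesis using key sig Mpos by blast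
qed

end
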